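(* Let $N = n+1 \ge 3$ be odd. The set \[ \Delta_N = \{ G^{\mathbf{0}}_{\boldsymbol{\lambda}} \mid \boldsymbol{\lambda} \in \Lambda_N \} \] is a regular, unimodular triangulation of $P_{C_N}$, and it is induced by the height function $\omega: S_{C_N}\to\mathbb{Z}$ with $\omega(\mathbf{0}) = 0$ and $\omega(\mathbf{a}) = 1$ for all $\mathbf{a} \neq \mathbf{0}$.
   Context: $\mathbf{e}_1,\dots,\mathbf{e}_n$ is the standard basis of $\mathbb{R}^n$, with $\mathbf{e}_0 = \mathbf{e}_N = \mathbf{0}$. The cycle graph $C_N$ has vertices $0,\dots,N-1$ and edges $\{0,1\},\dots,\{N-2,N-1\},\{N-1,0\}$. $P_{C_N} = \operatorname{conv}\{\mathbf{e}_i-\mathbf{e}_j \mid \{i,j\}\text{ an edge}\}$ (both orientations) and $S_{C_N} = \{\mathbf{0}\}\cup\{\mathbf{e}_i-\mathbf{e}_j\mid\{i,j\}\text{ an edge}\}$. For odd $N$, $\Lambda_N = \bigcup_{j=1}^N \Lambda_{j,N}$ with $\Lambda_{j,N} = \{(\lambda_1,\dots,\lambda_N) \mid \lambda_j = 0,\ \lambda_i\in\{-1,1\}\text{ for } i\ne j,\ \sum_i\lambda_i = 0\}$. For $\boldsymbol{\lambda}\in\Lambda_{j,N}$, $G^{\mathbf{0}}_{\boldsymbol{\lambda}} = \operatorname{conv}(\{\mathbf{0}\}\cup\{\lambda_i(\mathbf{e}_{i-1}-\mathbf{e}_i) \mid 1\le i\le N,\ i\neq j\})$. A triangulation is unimodular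 if each simplex is a lattice simplex of normalized volume $1$; it is regular and induced by $\omega$ if its simplices are exactly the projections to $\mathbb{R}^n$ of the lower facets (facets whose inner normal has positive last coordinate) of $\operatorname{conv}\{(\mathbf{a},\omega(\mathbf{a}))\mid\mathbf{a}\in S_{C_N}\}$. *)

theory Defs
  imports "HOL-Analysis.Analysis"
begin

text \<open>We model R^n as real^'n for a finite linearly ordered index type 'n with
  CARD('n) = n; coordinate k (1 <= k <= n) is the k-th smallest element of 'n.
  N = n + 1 = CARD('n) + 1.\<close>

definition cidx :: "nat \<Rightarrow> 'n::{finite,linorder}" where
  "cidx k = sorted_list_of_set (UNIV :: 'n set) ! (k - 1)"

text \<open>Standard basis vector e_i, with e_i = 0 unless 1 <= i <= n (so e_0 = e_N = 0).\<close>
definition ev :: "nat \<Rightarrow> real ^ 'n::{finite,linorder}" where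
  "ev i = (if 1 \<le> i \<and> i \<le> CARD('n) then axis (cidx i) 1 else 0)"

definition cyc_edge :: "nat \<Rightarrow> nat \<Rightarrow> nat \<Rightarrow> bool" where
  "cyc_edge N i j \<longleftrightarrow> i < N \<and> j < N \<and> i \<noteq> j \<and> (j = Suc i mod N \<or> i = Suc j mod N)"

definition cyc_roots :: "(real ^ 'n::{finite,linorder}) set" where
  "cyc_roots = {ev i - ev j | i j. cyc_edge (CARD('n) + 1) i j}"

definition P_C :: "(real ^ 'n::{finite,linorder}) set" where
  "P_C = convex hull cyc_roots"

definition S_C :: "(real ^ 'n::{finite,linorder}) set" where
  "S_C = insert 0 cyc_roots"

text \<open>Lambda_{j,N}: tuples (lambda_1..lambda_N), encoded as functions nat => int
  vanishing outside {1..N}.\<close>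
definition Lam :: "nat \<Rightarrow> nat \<Rightarrow> (nat \<Rightarrow> int) set" where
  "Lam j N = {lam. lam j = 0 \<and> (\<forall>i\<in>{1..N} - {j}. lam i \<in> {-1, 1})
                 \<and> (\<forall>i. i \<notin> {1..N} \<longrightarrow> lam i = 0) \<and> (\<Sum>i=1..N. lam i) = 0}"

definition G0 :: "nat \<Rightarrow> (nat \<Rightarrow> int) \<Rightarrow> (real ^ 'n::{finite,linorder}) set" where
  "G0 j lam = convex hull (insert 0
      {of_int (lam i) *\<^sub>R (ev (i - 1) - ev i) | i. 1 \<le> i \<and> i \<le> CARD('n) + 1 \<and> i \<noteq> j})"

definition Delta :: "(real ^ 'n::{finite,linorder}) set set" where
  "Delta = {G0 j lam | j lam. j \<in> {1..CARD('n) + 1} \<and> lam \<in> Lam j (CARD('n) + 1)}"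

definition is_triangulation :: "(real ^ 'n::finite) set set \<Rightarrow> (real ^ 'n) set \<Rightarrow> bool" where
  "is_triangulation D P \<longleftrightarrow> finite D \<and> (\<forall>T\<in>D. int CARD('n) simplex T) \<and> \<Union>D = P
     \<and> (\<forall>T1\<in>D. \<forall>T2\<in>D. (T1 \<inter> T2) face_of T1 \<and> (T1 \<inter> T2) face_of T2)"

definition lattice_point :: "real ^ 'n::finite \<Rightarrow> bool" where
  "lattice_point v \<longleftrightarrow> (\<forall>i. v $ i \<in> \<int>)"

definition lattice_simplex :: "(real ^ 'n::finite) set \<Rightarrow> bool" where
  "lattice_simplex T \<longleftrightarrow> (\<exists>C. \<not> affine_dependent C \<and> card C = CARD('n) + 1
      \<and> T = convex hull C \<and> (\<forall>v\<in>C. lattice_point v))"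

definition normalized_volume :: "(real ^ 'n::finite) set \<Rightarrow> real" where
  "normalized_volume T = fact CARD('n) * measure lborel T"

definition unimodular :: "(real ^ 'n::finite) set set \<Rightarrow> bool" where
  "unimodular D \<longleftrightarrow> (\<forall>T\<in>D. lattice_simplex T \<and> normalized_volume T = 1)"

definition lifted :: "(real ^ 'n::finite) set \<Rightarrow> (real ^ 'n \<Rightarrow> real) \<Rightarrow> ((real ^ 'n) \<times> real) set" where
  "lifted S \<omega> = convex hull ((\<lambda>a. (a, \<omega> a)) ` S)"

definition lower_facet :: "((real ^ 'n::finite) \<times> real) set \<Rightarrow> ((real ^ 'n) \<times> real) set \<Rightarrow> bool" where
  "lower_facet Q F \<longleftrightarrow> F facet_of Q \<and>
     (\<exists>u b. snd u > 0 \<and> (\<forall>p\<in>Q. b \<le> u \<bullet> p) \<and> F = {p\<in>Q. u \<bullet> p = b})"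

definition induced_by :: "(real ^ 'n::finite) set \<Rightarrow> (real ^ 'n \<Rightarrow> real) \<Rightarrow> (real ^ 'n) set set \<Rightarrow> bool" where
  "induced_by S \<omega> D \<longleftrightarrow> D = {fst ` F | F. lower_facet (lifted S \<omega>) F}"

definition regular_triangulation :: "(real ^ 'n::finite) set \<Rightarrow> (real ^ 'n) set set \<Rightarrow> bool" where
  "regular_triangulation S D \<longleftrightarrow> (\<exists>\<omega>. induced_by S \<omega> D)"

end

theory Submission
  imports Defs
begin


definition wv :: "nat \<Rightarrow> real^'n::{finite,linorder}" where "wv i = ev (i - 1) - ev i"

lemma cidx_bij: "bij_betw (cidx :: nat \<Rightarrow> 'n::{finite,linorder}) {1..CARD('n)} UNIV"
proof -
  let ?xs = "sorted_list_of_set (UNIV :: 'n set)"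
  have d: "distinct ?xs" and s: "set ?xs = UNIV" and l: "length ?xs = CARD('n)" by auto
  have b: "bij_betw ((!) ?xs) {..<CARD('n)} UNIV" using bij_betw_nth[OF d] l s by simp
  have b2: "bij_betw (\<lambda>k. k - 1) {1..CARD('n)} {..<CARD('n)}"
    by (rule bij_betw_byWitness[where f'="Suc"]) auto
  have "cidx = (!) ?xs \<circ> (\<lambda>k. k-1)" by (auto simp: cidx_def fun_eq_iff)
  then show ?thesis using bij_betw_trans[OF b2 b] by simp
qed

definition idx :: "'n::{finite,linorder} \<Rightarrow> nat" where "idx = inv_into {1..CARD('n)} cidx"

lemma idx_range: "idx (c::'n::{finite,linorder}) \<in> {1..CARD('n)}"
  unfolding idx_def using cidx_bij[where 'n='n]
  by (metis UNIV_I bij_betw_def inv_into_into)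

lemma cidx_idx[simp]: "cidx (idx (c::'n::{finite,linorder})) = c"
  unfolding idx_def using cidx_bij[where 'n='n]
  by (metis UNIV_I bij_betw_def f_inv_into_f)

lemma idx_cidx: "k \<in> {1..CARD('n)} \<Longrightarrow> idx (cidx k :: 'n::{finite,linorder}) = k"
  unfolding idx_def using cidx_bij[where 'n='n]
  by (metis bij_betw_def inv_into_f_f)

lemma cidx_inj: "k \<in> {1..CARD('n)} \<Longrightarrow> l \<in> {1..CARD('n)} \<Longrightarrow> (cidx k :: 'n::{finite,linorder}) = cidx l \<Longrightarrow> k = l"
  by (metis idx_cidx)

lemma ev_comp: "(ev k :: real^'n::{finite,linorder}) $ c = (if 1 \<le> k \<and> k \<le> CARD('n) \<and> cidx k = c then 1 else 0)"
  by (auto simp add: ev_def axis_def)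

lemma inner_ev: "x \<bullet> (ev k :: real^'n::{finite,linorder}) = (if 1 \<le> k \<and> k \<le> CARD('n) then x $ cidx k else 0)"
  by (simp add: ev_def inner_axis)

lemma ev0[simp]: "(ev 0 :: real^'n::{finite,linorder}) = 0" by (simp add: ev_def)
lemma evN[simp]: "(ev (Suc CARD('n)) :: real^'n::{finite,linorder}) = 0" by (simp add: ev_def)

lemma sum_wv: "(\<Sum>i=1..CARD('n)+1. wv i) = (0::real^'n::{finite,linorder})"
proof -
  have "(\<Sum>i=1..CARD('n)+1. (wv i::(real,'n) vec)) = (\<Sum>i=0..CARD('n). wv (Suc i))"
    by (metis One_nat_def Suc_eq_plus1 sum.shift_bounds_cl_Suc_ivl)
  also have "\<dots> = - (\<Sum>i=0..CARD('n). ev (Suc i) - ev i)"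
    by (simp add: wv_def sum_negf[symmetric])
  also have "\<dots> = 0" by (subst sum_Suc_diff) auto
  finally show ?thesis .
qed

lemma dual_exists:
  fixes a :: "nat \<Rightarrow> real"
  assumes "(\<Sum>i=1..CARD('n)+1. a i) = 0"
  shows "\<exists>h::real^'n::{finite,linorder}. (\<forall>i\<in>{1..CARD('n)+1}. h \<bullet> wv i = a i) \<and> (\<forall>c. h $ c = - (\<Sum>i=1..idx c. a i))"
proof -
  define h :: "(real,'n) vec" where "h = (\<chi> c. - (\<Sum>i=1..idx c. a i))"
  have hev: "h \<bullet> ev k = - (\<Sum>i=1..k. a i)" if hk: "k \<le> CARD('n)+1" for k
  proof -
    consider "k = 0" | "1 \<le> k \<and> k \<le> CARD('n)" | "k = CARD('n) + 1" using hk by (cases "k = 0"; cases "k = CARD('n)+1"; auto)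
    then show ?thesis
    proof cases
      case 1 then show ?thesis by simp
    next
      case 2 then show ?thesis by (simp add: inner_ev h_def idx_cidx)
    next
      case 3 then show ?thesis using assms by simp
    qed
  qed
  have "h \<bullet> wv i = a i" if hi: "i \<in> {1..CARD('n)+1}" for i
  proof -
    obtain m where m: "i = Suc m" using hi by (cases i) auto
    have "h \<bullet> wv i = h \<bullet> ev m - h \<bullet> ev (Suc m)" by (simp add: wv_def m inner_diff_right)
    also have "\<dots> = a i" using hi m by (simp add: hev)
    finally show ?thesis .
  qed
  moreover have "\<forall>c. h $ c = - (\<Sum>i=1..idx c. a i)" by (simp add: h_def)
  ultimately show ?thesis by blast
qed

lemma roots_char: "r \<in> (cyc_roots :: (real^'n::{finite,linorder}) set) \<longleftrightarrow> (\<exists>i\<in>{1..CARD('n)+1}. r = wv i \<or> r = - wv i)"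
proof
  assume "r \<in> cyc_roots"
  then obtain a b where r: "r = ev a - ev b" and e: "cyc_edge (CARD('n)+1) a b"
    unfolding cyc_roots_def by blast
  have one: "\<exists>i\<in>{1..CARD('n)+1}. ev a - ev b = (wv i :: (real,'n) vec)" if "a < CARD('n)+1" "b = Suc a mod (CARD('n)+1)" for a b
  proof (cases "a < CARD('n)")
    case True
    then have "b = Suc a" using that by simp
    then show ?thesis using True by (intro bexI[where x="Suc a"]) (auto simp: wv_def)
  next
    case False
    then have a: "a = CARD('n)" using that by simp
    then have "b = 0" using that by simp
    note a this
    then show ?thesis by (intro bexI[where x="Suc CARD('n)"]) (auto simp: wv_def)
  qed
  from e have "a < CARD('n)+1" "b < CARD('n)+1" "b = Suc a mod (CARD('n)+1) \<or> a = Suc b mod (CARD('n)+1)"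
    unfolding cyc_edge_def by auto
  then show "\<exists>i\<in>{1..CARD('n)+1}. r = wv i \<or> r = - wv i"
  proof (elim disjE)
    assume "b = Suc a mod (CARD('n)+1)"
    then show ?thesis using one[of a b] \<open>a < _\<close> r by auto
  next
    assume "a = Suc b mod (CARD('n)+1)"
    then obtain i where "i\<in>{1..CARD('n)+1}" "ev b - ev a = (wv i :: (real,'n) vec)" using one[of b a] \<open>b < _\<close> by auto
    then show ?thesis using r by (intro bexI[of _ i]) (auto simp: algebra_simps)
  qed
next
  assume "\<exists>i\<in>{1..CARD('n)+1}. r = wv i \<or> r = - wv i"
  then obtain i where i: "i\<in>{1..CARD('n)+1}" and r: "r = wv i \<or> r = - wv i" by blast
  obtain m where m: "i = Suc m" using i by (cases i) auto
  define b where "b = (if i = CARD('n)+1 then 0 else i)"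
  have evb: "ev b = (ev i :: (real,'n) vec)" by (cases "i = CARD('n)+1") (auto simp: b_def)
  have e1: "cyc_edge (CARD('n)+1) m b" using i m by (auto simp: cyc_edge_def b_def)
  have e2: "cyc_edge (CARD('n)+1) b m" using i m by (auto simp: cyc_edge_def b_def)
  have evb': "ev b = (ev (Suc m) :: (real,'n) vec)" by (metis evb m)
  have "(wv i :: (real,'n) vec) = ev m - ev b" by (simp add: wv_def m evb')
  moreover have "- (wv i :: (real,'n) vec) = ev b - ev m" by (simp add: wv_def m evb')
  ultimately show "r \<in> cyc_roots" unfolding cyc_roots_def using r e1 e2 by blast
qed


typedef 'a wo = "UNIV :: 'a set" by auto

instantiation wo :: (linorder) linorder
begin
definition less_eq_wo :: "'a wo \<Rightarrow> 'a wo \<Rightarrow> bool" where "less_eq_wo x y \<longleftrightarrow> Rep_wo x \<le> Rep_wo y"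
definition less_wo :: "'a wo \<Rightarrow> 'a wo \<Rightarrow> bool" where "less_wo x y \<longleftrightarrow> Rep_wo x < Rep_wo y"
instance by standard (auto simp: less_eq_wo_def less_wo_def less_le Rep_wo_inject[symmetric] dest: antisym)
end

instance wo :: (finite) finite
proof
  have "(UNIV :: 'a wo set) = Abs_wo ` UNIV" by (metis Abs_wo_cases surj_def)
  then show "finite (UNIV :: 'a wo set)" by (metis finite finite_imageI)
qed

instance wo :: ("{finite,linorder}") wellorder
proof
  fix P :: "'a wo \<Rightarrow> bool" and a
  assume step: "\<And>x. (\<And>y. y < x \<Longrightarrow> P y) \<Longrightarrow> P x"
  show "P a"
  proof (induction a rule: measure_induct_rule[where f="\<lambda>x. card {y::'a wo. y < x}"])
    case (less x)
    show ?case
    proof (rule step)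
      fix y assume "y < x"
      then have "{z. z < y} \<subset> {z. z < x}" by auto
      then have "card {z. z < y} < card {z. z < x}" by (simp add: psubset_card_mono)
      then show "P y" using less by blast
    qed
  qed
qed

lemma card_wo: "CARD('a::finite wo) = CARD('a)"
  using type_definition.card[OF type_definition_wo] by simp

definition phi :: "real^'a::finite \<Rightarrow> real^'a wo" where "phi x = (\<chi> i. x $ Rep_wo i)"
definition psi :: "real^'a::finite wo \<Rightarrow> real^'a" where "psi y = (\<chi> c. y $ Abs_wo c)"

lemma phi_comp[simp]: "phi x $ i = x $ Rep_wo i" by (simp add: phi_def)
lemma psi_comp[simp]: "psi y $ c = y $ Abs_wo c" by (simp add: psi_def)

lemma psi_phi[simp]: "psi (phi x) = x" by (simp add: vec_eq_iff Abs_wo_inverse)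
lemma phi_psi[simp]: "phi (psi y) = y" by (simp add: vec_eq_iff Rep_wo_inverse)

lemma linear_phi: "linear phi"
  by (rule linearI) (simp_all add: vec_eq_iff)
lemma linear_psi: "linear psi"
  by (rule linearI) (simp_all add: vec_eq_iff)

lemma prod_Basis_cart: "(\<Prod>b\<in>Basis. (x::real^'m::finite) \<bullet> b) = (\<Prod>i\<in>UNIV. x $ i)"
  by (simp add: Basis_vec_def cart_eq_inner_axis axis_eq_axis prod.UNION_disjoint)

lemma prod_wo: "(\<Prod>i\<in>(UNIV::'a::finite wo set). f (Rep_wo i)) = (\<Prod>c\<in>UNIV. (f c :: real))"
proof -
  have "bij_betw Rep_wo (UNIV::'a wo set) UNIV"
    by (metis Rep_wo_inject UNIV_I bij_betw_def inj_onI Rep_wo_inverse surj_def Abs_wo_inverse)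
  then show ?thesis by (rule prod.reindex_bij_betw)
qed

lemma sum_wo: "(\<Sum>i\<in>(UNIV::'a::finite wo set). f (Rep_wo i)) = (\<Sum>c\<in>UNIV. (f c :: real))"
proof -
  have "bij_betw Rep_wo (UNIV::'a wo set) UNIV"
    by (metis Rep_wo_inject UNIV_I bij_betw_def inj_onI Rep_wo_inverse surj_def Abs_wo_inverse)
  then show ?thesis by (rule sum.reindex_bij_betw)
qed

lemma inner_phi: "phi x \<bullet> phi y = x \<bullet> y"
  by (simp add: inner_vec_def sum_wo[where f="\<lambda>c. x $ c * y $ c"])

lemma psi_meas: "psi \<in> borel_measurable (borel :: (real^'a::finite wo) measure)"
proof -
  have "bounded_linear psi" using linear_psi by (simp add: linear_conv_bounded_linear)
  then have "continuous_on UNIV psi" by (rule linear_continuous_on)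
  then show ?thesis by (rule borel_measurable_continuous_onI)
qed

lemma distr_psi: "distr lborel borel (psi :: real^'a::finite wo \<Rightarrow> real^'a) = lborel"
proof (rule lborel_eqI[symmetric])
  show "sets (distr lborel borel psi) = sets (borel :: (real^'a) measure)" by simp
  fix l u :: "real^'a"
  assume lu: "\<And>b. b \<in> Basis \<Longrightarrow> l \<bullet> b \<le> u \<bullet> b"
  have lu': "l $ c \<le> u $ c" for c
  proof -
    have "axis c 1 \<in> (Basis :: (real^'a) set)" by (auto simp: Basis_vec_def)
    then show ?thesis using lu[of "axis c 1"] by (simp add: cart_eq_inner_axis)
  qed
  have pre: "psi -` box l u = box (phi l) (phi u)"
  proof -
    have "y \<in> box (phi l) (phi u) \<longleftrightarrow> psi y \<in> box l u" for y
    proof -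
      have "psi y \<in> box l u \<longleftrightarrow> (\<forall>c. l $ c < y $ Abs_wo c \<and> y $ Abs_wo c < u $ c)"
        by (simp add: mem_box_cart)
      also have "\<dots> \<longleftrightarrow> (\<forall>i. l $ Rep_wo i < y $ i \<and> y $ i < u $ Rep_wo i)"
        by (metis Abs_wo_inverse Rep_wo_inverse UNIV_I)
      also have "\<dots> \<longleftrightarrow> y \<in> box (phi l) (phi u)" by (simp add: mem_box_cart)
      finally show ?thesis by simp
    qed
    then show ?thesis by auto
  qed
  have "emeasure (distr lborel borel psi) (box l u) = emeasure lborel (box (phi l) (phi u))"
    by (subst emeasure_distr) (auto simp: psi_meas pre)
  also have "\<dots> = (\<Prod>b\<in>Basis. (phi u - phi l) \<bullet> b)"
  proof (rule emeasure_lborel_box)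
    fix b :: "real^'a wo" assume "b \<in> Basis"
    then obtain i where "b = axis i 1" by (auto simp: Basis_vec_def)
    then show "phi l \<bullet> b \<le> phi u \<bullet> b" using lu' by (simp add: inner_axis)
  qed
  also have "(\<Prod>b\<in>Basis. (phi u - phi l) \<bullet> b) = (\<Prod>i\<in>UNIV. (phi u - phi l) $ i)"
    by (rule prod_Basis_cart)
  also have "\<dots> = (\<Prod>c\<in>UNIV. (u - l) $ c)"
    using prod_wo[where f="\<lambda>c. (u - l) $ c"] by simp
  also have "\<dots> = (\<Prod>b\<in>Basis. (u - l) \<bullet> b)" by (rule prod_Basis_cart[symmetric])
  finally show "emeasure (distr lborel borel psi) (box l u) = ennreal (\<Prod>b\<in>Basis. (u - l) \<bullet> b)" .
qed

lemma measure_phi: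
  fixes S :: "(real^'a::finite) set"
  assumes "S \<in> sets borel"
  shows "measure lborel (phi ` S) = measure lborel S"
proof -
  have "measure lborel S = measure (distr lborel borel (psi :: real^'a wo \<Rightarrow> real^'a)) S"
    by (simp add: distr_psi)
  also have "\<dots> = measure lborel (psi -` S \<inter> space lborel)"
    using psi_meas assms by (subst measure_distr) auto
  also have "psi -` S \<inter> space lborel = phi ` S"
    by (auto simp: image_iff) (metis phi_psi)
  finally show ?thesis by simp
qed

lemma det_Ints:
  fixes A :: "real^'m::finite^'m"
  assumes "\<And>i j. A $ i $ j \<in> \<int>"
  shows "det A \<in> \<int>"
  unfolding det_def
  by (intro Ints_sum Ints_mult Ints_prod) (auto simp: assms)

lemma unimod_vol:
  fixes f hs :: "'m::{finite,wellorder} \<Rightarrow> (real,'m) vec"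
  assumes dual: "\<And>i j. hs i \<bullet> f j = (if i = j then 1 else 0)"
    and fi: "\<And>i k. f i $ k \<in> \<int>" and hi: "\<And>i k. hs i $ k \<in> \<int>"
  shows "measure lborel (convex hull (insert 0 (range f))) = 1 / fact CARD('m)"
proof -
  have inj: "inj f"
  proof (rule injI)
    fix x y assume "f x = f y"
    then have "hs x \<bullet> f x = hs x \<bullet> f y" by simp
    then show "x = y" using dual[of x x] dual[of x y] by (auto split: if_splits)
  qed
  have n0: "0 \<notin> range f"
  proof
    assume "0 \<in> range f"
    then obtain i where "f i = 0" by auto
    then show False using dual[of i i] by simp
  qed
  define X where "X = insert 0 (range f)"
  have cX: "card X = Suc CARD('m)" using n0 inj by (simp add: X_def card_image)
  have bij: "bij_betw f UNIV (X - {0})" using inj n0 by (auto simp: X_def bij_betw_def)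
  define M where "M = (\<chi> i. \<chi> j. f j $ i - (0::(real,'m) vec) $ i)"
  have "measure lborel (convex hull X) = \<bar>det M\<bar> / fact CARD('m)"
    unfolding M_def by (rule content_simplex) (use cX bij in \<open>auto simp: X_def\<close>)
  moreover have "\<bar>det M\<bar> = 1"
  proof -
    define B where "B = (\<chi> i. \<chi> k. hs i $ k)"
    have "B ** M = mat 1"
      by (simp add: vec_eq_iff matrix_matrix_mult_def B_def M_def mat_def dual[symmetric] inner_vec_def mult.commute)
    then have "det B * det M = 1" by (metis det_I det_mul)
    moreover have "det B \<in> \<int>" by (rule det_Ints) (simp add: B_def hi)
    moreover have "det M \<in> \<int>" by (rule det_Ints) (simp add: M_def fi)
    ultimately obtain a b where ab: "det B = of_int a" "det M = of_int b" "of_int a * of_int b = (1::real)"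
      by (metis Ints_cases)
    then have "a * b = 1" by (metis of_int_eq_iff of_int_mult of_int_1)
    then have "b = 1 \<or> b = -1" using zmult_eq_1_iff by blast
    then show ?thesis using ab by auto
  qed
  ultimately show ?thesis by (simp add: X_def)
qed


definition lv :: "(nat \<Rightarrow> int) \<Rightarrow> nat \<Rightarrow> real^'n::{finite,linorder}" where
  "lv lam i = of_int (lam i) *\<^sub>R wv i"

definition Vs :: "nat \<Rightarrow> (nat \<Rightarrow> int) \<Rightarrow> (real^'n::{finite,linorder}) set" where
  "Vs j lam = lv lam ` ({1..CARD('n)+1} - {j})"

lemma G0_Vs: "(G0 j lam :: (real^'n::{finite,linorder}) set) = convex hull (insert 0 (Vs j lam))"
proof -
  have "{of_int (lam i) *\<^sub>R (ev (i - 1) - ev i) | i. 1 \<le> i \<and> i \<le> CARD('n) + 1 \<and> i \<noteq> j} = (Vs j lam :: (real,'n) vec set)"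
    by (auto simp: Vs_def lv_def wv_def)
  then show ?thesis by (simp add: G0_def)
qed

lemma Lam_vals:
  assumes "lam \<in> Lam j N"
  shows "lam i = -1 \<or> lam i = 0 \<or> lam i = 1"
  using assms unfolding Lam_def by (cases "i \<in> {1..N} - {j}") auto

lemma Lam_nz:
  assumes "lam \<in> Lam j N" "i \<in> {1..N} - {j}"
  shows "lam i = -1 \<or> lam i = 1"
  using assms unfolding Lam_def by auto

lemma Lam_j: "lam \<in> Lam j N \<Longrightarrow> lam j = 0" unfolding Lam_def by auto

lemma Lam_out: "lam \<in> Lam j N \<Longrightarrow> i \<notin> {1..N} \<Longrightarrow> lam i = 0" unfolding Lam_def by auto

lemma Lam_sum: "lam \<in> Lam j N \<Longrightarrow> (\<Sum>i=1..N. lam i) = 0" unfolding Lam_def by auto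

lemma dual_lam:
  assumes "lam \<in> Lam j (CARD('n::{finite,linorder})+1)"
  shows "\<exists>h::real^'n::{finite,linorder}. \<forall>i\<in>{1..CARD('n)+1}. h \<bullet> wv i = of_int (lam i)"
proof -
  have "(\<Sum>i=1..CARD('n)+1. (of_int (lam i) :: real)) = 0"
    using Lam_sum[OF assms] by (metis of_int_0 of_int_sum)
  then show ?thesis using dual_exists[where 'n='n, of "\<lambda>i. of_int (lam i)"] by blast
qed

lemma dual_delta:
  assumes "i0 \<in> {1..CARD('n::{finite,linorder})+1}" "j \<in> {1..CARD('n)+1}" "i0 \<noteq> j"
  shows "\<exists>g::real^'n::{finite,linorder}. (\<forall>i\<in>{1..CARD('n)+1} - {j}. g \<bullet> wv i = (if i = i0 then 1 else 0)) \<and> (\<forall>c. g $ c \<in> \<int>)"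
proof -
  define a :: "nat \<Rightarrow> real" where "a i = (if i = i0 then 1 else 0) - (if i = j then 1 else 0)" for i
  have "(\<Sum>i=1..CARD('n)+1. a i) = 0"
    using assms by (simp add: a_def sum_subtractf)
  then obtain g :: "(real,'n) vec" where g: "\<forall>i\<in>{1..CARD('n)+1}. g \<bullet> wv i = a i" "\<forall>c. g $ c = - (\<Sum>i=1..idx c. a i)"
    using dual_exists[where 'n='n, of a] by blast
  have "\<forall>c. g $ c \<in> \<int>" using g(2) by (auto simp: a_def intro!: Ints_minus Ints_sum Ints_diff)
  moreover have "\<forall>i\<in>{1..CARD('n)+1} - {j}. g \<bullet> wv i = (if i = i0 then 1 else 0)"
    using g(1) by (auto simp: a_def)
  ultimately show ?thesis by blast
qed

lemma lv_dual:
  assumes lam: "lam \<in> Lam j (CARD('n::{finite,linorder})+1)" and i0: "i0 \<in> {1..CARD('n)+1} - {j}" and j: "j \<in> {1..CARD('n)+1}"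
  shows "\<exists>g::real^'n::{finite,linorder}. (\<forall>c. g $ c \<in> \<int>) \<and>
     (\<forall>i\<in>{1..CARD('n)+1} - {j}. g \<bullet> lv lam i = (if i = i0 then of_int (lam i0) else 0))"
proof -
  obtain g :: "(real,'n) vec" where g: "\<forall>i\<in>{1..CARD('n)+1} - {j}. g \<bullet> wv i = (if i = i0 then 1 else 0)" "\<forall>c. g $ c \<in> \<int>"
    using dual_delta[where 'n='n, of i0 j] i0 j by auto
  then show ?thesis by (intro exI[of _ g]) (auto simp: lv_def)
qed

lemma simplex_facts:
  assumes lam: "lam \<in> Lam j (CARD('n::{finite,linorder})+1)" and j: "j \<in> {1..CARD('n)+1}"
  shows "inj_on (lv lam :: nat \<Rightarrow> real^'n::{finite,linorder}) ({1..CARD('n)+1} - {j})"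
    and "(0::(real,'n) vec) \<notin> Vs j lam"
    and "card (insert (0::(real,'n) vec) (Vs j lam)) = CARD('n) + 1"
    and "\<not> affine_dependent (insert (0::(real,'n) vec) (Vs j lam))"
proof -
  let ?I = "{1..CARD('n)+1} - {j}"
  have nz: "lam i \<noteq> 0" if "i \<in> ?I" for i using Lam_nz[OF lam that] by auto
  show inj: "inj_on (lv lam :: nat \<Rightarrow> (real,'n) vec) ?I"
  proof (rule inj_onI)
    fix x y assume x: "x \<in> ?I" and y: "y \<in> ?I" and e: "(lv lam x :: (real,'n) vec) = lv lam y"
    obtain g :: "(real,'n) vec" where g: "\<forall>i\<in>?I. g \<bullet> lv lam i = (if i = x then of_int (lam x) else 0)"
      using lv_dual[OF lam x j] by blast
    show "x = y"
    proof (rule ccontr)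
      assume "x \<noteq> y"
      then have "g \<bullet> lv lam x = 0" using e g y by simp
      then show False using g x nz[OF x] by simp
    qed
  qed
  show n0: "(0::(real,'n) vec) \<notin> Vs j lam"
  proof
    assume "(0::(real,'n) vec) \<in> Vs j lam"
    then obtain i where i0: "(0::(real,'n) vec) = lv lam i" "i \<in> ?I" unfolding Vs_def by (rule imageE)
    then have i: "i \<in> ?I" "lv lam i = (0::(real,'n) vec)" by auto
    obtain g :: "(real,'n) vec" where g: "\<forall>k\<in>?I. g \<bullet> lv lam k = (if k = i then of_int (lam i) else 0)"
      using lv_dual[OF lam i(1) j] by blast
    then show False using i nz[OF i(1)] by force
  qed
  have cI: "card ?I = CARD('n)" using j by simp
  show "card (insert (0::(real,'n) vec) (Vs j lam)) = CARD('n) + 1"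
    using n0 inj cI by (simp add: Vs_def card_image)
  show "\<not> affine_dependent (insert (0::(real,'n) vec) (Vs j lam))"
  proof
    let ?C = "insert (0::(real,'n) vec) (Vs j lam)"
    assume "affine_dependent ?C"
    then obtain U where U: "sum U ?C = 0" "\<exists>v\<in>?C. U v \<noteq> 0" "(\<Sum>v\<in>?C. U v *\<^sub>R v) = 0"
      using affine_dependent_explicit_finite[of ?C] by (auto simp: Vs_def)
    have fin: "finite (Vs j lam :: (real,'n) vec set)" by (simp add: Vs_def)
    have zV: "U v = 0" if v: "v \<in> Vs j lam" for v
    proof -
      obtain i0 where i0': "v = lv lam i0" "i0 \<in> ?I" using v unfolding Vs_def by (rule imageE)
      then have i0: "i0 \<in> ?I" "v = lv lam i0" by auto
      obtain g :: "(real,'n) vec" where g: "\<forall>k\<in>?I. g \<bullet> lv lam k = (if k = i0 then of_int (lam i0) else 0)"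
        using lv_dual[OF lam i0(1) j] by blast
      have "0 = g \<bullet> (\<Sum>v\<in>?C. U v *\<^sub>R v)" using U(3) by simp
      also have "\<dots> = (\<Sum>v\<in>?C. U v * (g \<bullet> v))" by (simp add: inner_sum_right)
      also have "\<dots> = (\<Sum>v\<in>Vs j lam. U v * (g \<bullet> v))" using n0 fin by simp
      also have "\<dots> = (\<Sum>i\<in>?I. U (lv lam i) * (g \<bullet> lv lam i))"
        unfolding Vs_def by (rule sum.reindex_cong[OF inj refl]) simp
      also have "\<dots> = (\<Sum>i\<in>?I. if i = i0 then U (lv lam i0) * of_int (lam i0) else 0)"
        by (rule sum.cong) (auto simp: g)
      also have "\<dots> = U (lv lam i0) * of_int (lam i0)" using i0(1) by simp
      finally show ?thesis using nz[OF i0(1)] i0(2) by simp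
    qed
    then have "sum U (Vs j lam) = 0" by simp
    then have "U 0 = 0" using U(1) n0 fin by simp
    then show False using U(2) zV by auto
  qed
qed

lemma hull_char:
  fixes f :: "nat \<Rightarrow> 'a::real_vector"
  assumes fin: "finite I"
  shows "x \<in> convex hull (insert 0 (f ` I)) \<longleftrightarrow> (\<exists>t. (\<forall>i\<in>I. 0 \<le> t i) \<and> sum t I \<le> 1 \<and> x = (\<Sum>i\<in>I. t i *\<^sub>R f i))"
proof
  define R where "R = {x. \<exists>t. (\<forall>i\<in>I. 0 \<le> t i) \<and> sum t I \<le> 1 \<and> x = (\<Sum>i\<in>I. t i *\<^sub>R f i)}"
  have "convex R"
  proof (rule convexI)
    fix x y u v assume x: "x \<in> R" and y: "y \<in> R" and uv: "0 \<le> (u::real)" "0 \<le> v" "u + v = 1"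
    obtain t where t: "\<forall>i\<in>I. 0 \<le> t i" "sum t I \<le> 1" "x = (\<Sum>i\<in>I. t i *\<^sub>R f i)" using x by (auto simp: R_def)
    obtain s where s: "\<forall>i\<in>I. 0 \<le> s i" "sum s I \<le> 1" "y = (\<Sum>i\<in>I. s i *\<^sub>R f i)" using y by (auto simp: R_def)
    have "(\<forall>i\<in>I. 0 \<le> u * t i + v * s i)" using t s uv by simp
    moreover have "sum (\<lambda>i. u * t i + v * s i) I \<le> 1"
    proof -
      have "sum (\<lambda>i. u * t i + v * s i) I = u * sum t I + v * sum s I"
        by (simp add: sum.distrib sum_distrib_left)
      also have "\<dots> \<le> u * 1 + v * 1" using t s uv by (intro add_mono mult_left_mono) auto
      finally show ?thesis using uv by simp
    qed
    moreover have "u *\<^sub>R x + v *\<^sub>R y = (\<Sum>i\<in>I. (u * t i + v * s i) *\<^sub>R f i)"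
      by (simp add: t s scaleR_sum_right sum.distrib scaleR_add_left)
    ultimately have "(\<forall>i\<in>I. 0 \<le> u * t i + v * s i) \<and> sum (\<lambda>i. u * t i + v * s i) I \<le> 1 \<and> u *\<^sub>R x + v *\<^sub>R y = (\<Sum>i\<in>I. (u * t i + v * s i) *\<^sub>R f i)"
      by blast
    then show "u *\<^sub>R x + v *\<^sub>R y \<in> R" unfolding R_def mem_Collect_eq by (rule exI[where x="\<lambda>i. u * t i + v * s i"])
  qed
  moreover have "insert 0 (f ` I) \<subseteq> R"
  proof
    fix y assume "y \<in> insert 0 (f ` I)"
    then consider "y = 0" | i where "i \<in> I" "y = f i" by auto
    then show "y \<in> R"
    proof cases
      case 1 then show ?thesis unfolding R_def by (intro CollectI exI[of _ "\<lambda>_. 0"]) simp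
    next
      case 2
      have e1: "(\<Sum>k\<in>I. (if k = i then 1::real else 0) *\<^sub>R f k) = (\<Sum>k\<in>I. if k = i then f k else 0)"
        by (rule sum.cong) auto
      also have "\<dots> = f i" using 2 fin by simp
      finally have e1: "(\<Sum>k\<in>I. (if k = i then 1::real else 0) *\<^sub>R f k) = f i" .
      have e2: "(\<Sum>k\<in>I. (if k = i then 1::real else 0)) = 1" using 2 fin by simp
      show ?thesis unfolding R_def
        by (rule CollectI, rule exI[of _ "\<lambda>k. if k = i then 1 else 0"]) (use e1 e2 2 in auto)
    qed
  qed
  ultimately have "convex hull (insert 0 (f ` I)) \<subseteq> R" by (rule hull_minimal[rotated])
  then show "x \<in> convex hull insert 0 (f ` I) \<Longrightarrow> \<exists>t. (\<forall>i\<in>I. 0 \<le> t i) \<and> sum t I \<le> 1 \<and> x = (\<Sum>i\<in>I. t i *\<^sub>R f i)"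
    unfolding R_def by blast
next
  assume "\<exists>t. (\<forall>i\<in>I. 0 \<le> t i) \<and> sum t I \<le> 1 \<and> x = (\<Sum>i\<in>I. t i *\<^sub>R f i)"
  then obtain t where t: "\<forall>i\<in>I. 0 \<le> t i" "sum t I \<le> 1" "x = (\<Sum>i\<in>I. t i *\<^sub>R f i)" by blast
  show "x \<in> convex hull (insert 0 (f ` I))"
  proof (cases "sum t I = 0")
    case True
    then have "\<forall>i\<in>I. t i = 0" using t(1) fin by (simp add: sum_nonneg_eq_0_iff)
    then have "x = 0" using t(3) by simp
    then show ?thesis by (simp add: hull_inc)
  next
    case False
    define s where "s = sum t I"
    have s0: "s > 0" using False t(1) unfolding s_def by (metis less_eq_real_def sum_nonneg)
    define b where "b = (\<Sum>i\<in>I. (t i / s) *\<^sub>R f i)"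
    have "b \<in> convex hull (f ` I)"
      unfolding b_def
    proof (rule convex_sum[OF fin convex_convex_hull])
      show "(\<Sum>i\<in>I. t i / s) = 1" using s0 by (simp add: s_def sum_divide_distrib[symmetric])
      show "\<And>i. i \<in> I \<Longrightarrow> 0 \<le> t i / s" using t(1) s0 by simp
      show "\<And>i. i \<in> I \<Longrightarrow> f i \<in> convex hull f ` I" by (simp add: hull_inc)
    qed
    then have b: "b \<in> convex hull (insert 0 (f ` I))" by (meson hull_mono subsetD subset_insertI)
    have z: "0 \<in> convex hull (insert 0 (f ` I))" by (simp add: hull_inc)
    have "s *\<^sub>R b + (1 - s) *\<^sub>R 0 \<in> convex hull (insert 0 (f ` I))"
      using convexD[OF convex_convex_hull b z, of s "1 - s"] s0 t(2) by (simp add: s_def)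
    moreover have "s *\<^sub>R b = x" using s0 by (simp add: b_def t(3) scaleR_sum_right)
    ultimately show ?thesis by simp
  qed
qed

lemma G0_char:
  assumes lam: "lam \<in> Lam j (CARD('n::{finite,linorder})+1)" and j: "j \<in> {1..CARD('n)+1}"
  shows "x \<in> (G0 j lam :: (real^'n::{finite,linorder}) set) \<longleftrightarrow>
    (\<exists>t. (\<forall>i\<in>{1..CARD('n)+1}. 0 \<le> t i) \<and> sum t {1..CARD('n)+1} \<le> 1 \<and> x = (\<Sum>i\<in>{1..CARD('n)+1}. t i *\<^sub>R lv lam i))"
proof -
  let ?N = "{1..CARD('n)+1}" let ?I = "?N - {j}"
  have lj: "(lv lam j :: (real,'n) vec) = 0" using Lam_j[OF lam] by (simp add: lv_def)
  have rem: "sum g ?N = g j + sum g ?I" for g :: "nat \<Rightarrow> 'z::comm_monoid_add"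
    by (rule sum.remove) (use j in auto)
  have "x \<in> G0 j lam \<longleftrightarrow> (\<exists>t. (\<forall>i\<in>?I. 0 \<le> t i) \<and> sum t ?I \<le> 1 \<and> x = (\<Sum>i\<in>?I. t i *\<^sub>R lv lam i))"
    unfolding G0_Vs Vs_def by (rule hull_char) simp
  also have "\<dots> \<longleftrightarrow> (\<exists>t. (\<forall>i\<in>?N. 0 \<le> t i) \<and> sum t ?N \<le> 1 \<and> x = (\<Sum>i\<in>?N. t i *\<^sub>R lv lam i))"
  proof
    assume "\<exists>t. (\<forall>i\<in>?I. 0 \<le> t i) \<and> sum t ?I \<le> 1 \<and> x = (\<Sum>i\<in>?I. t i *\<^sub>R lv lam i)"
    then obtain t where t: "\<forall>i\<in>?I. 0 \<le> t i" "sum t ?I \<le> 1" "x = (\<Sum>i\<in>?I. t i *\<^sub>R lv lam i)" by blast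
    define t' where "t' i = (if i = j then 0 else t i)" for i
    have e1: "sum t' ?N = sum t ?I" unfolding rem by (simp add: t'_def)
    have e2: "(\<Sum>i\<in>?N. t' i *\<^sub>R lv lam i) = (\<Sum>i\<in>?I. t i *\<^sub>R lv lam i)"
      unfolding rem by (simp add: t'_def lj)
    have e3: "\<forall>i\<in>?N. 0 \<le> t' i" using t(1) by (simp add: t'_def)
    have e4: "sum t' ?N \<le> 1" using e1 t(2) by linarith
    have e5: "x = (\<Sum>i\<in>?N. t' i *\<^sub>R lv lam i)" by (simp only: e2 t(3))
    have "(\<forall>i\<in>?N. 0 \<le> t' i) \<and> sum t' ?N \<le> 1 \<and> x = (\<Sum>i\<in>?N. t' i *\<^sub>R lv lam i)"
      using e3 e4 e5 by blast
    then show "\<exists>t. (\<forall>i\<in>?N. 0 \<le> t i) \<and> sum t ?N \<le> 1 \<and> x = (\<Sum>i\<in>?N. t i *\<^sub>R lv lam i)"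
      by (rule exI[of _ t'])
  next
    assume "\<exists>t. (\<forall>i\<in>?N. 0 \<le> t i) \<and> sum t ?N \<le> 1 \<and> x = (\<Sum>i\<in>?N. t i *\<^sub>R lv lam i)"
    then obtain t where t: "\<forall>i\<in>?N. 0 \<le> t i" "sum t ?N \<le> 1" "x = (\<Sum>i\<in>?N. t i *\<^sub>R lv lam i)" by blast
    have "sum t ?I \<le> sum t ?N" using t(1) by (intro sum_mono2) auto
    moreover have "x = (\<Sum>i\<in>?I. t i *\<^sub>R lv lam i)" using t(3) unfolding rem by (simp add: lj)
    ultimately have "(\<forall>i\<in>?I. 0 \<le> t i) \<and> sum t ?I \<le> 1 \<and> x = (\<Sum>i\<in>?I. t i *\<^sub>R lv lam i)"
      using t by auto
    then show "\<exists>t. (\<forall>i\<in>?I. 0 \<le> t i) \<and> sum t ?I \<le> 1 \<and> x = (\<Sum>i\<in>?I. t i *\<^sub>R lv lam i)"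
      by (rule exI[of _ t])
  qed
  finally show ?thesis .
qed


lemma median:
  fixes s :: "nat \<Rightarrow> real" and m :: nat
  assumes S: "(\<Sum>i\<in>{1..2*m+1}. \<bar>s i\<bar>) \<le> 1"
  shows "\<exists>j lam t. j \<in> {1..2*m+1} \<and> lam \<in> Lam j (2*m+1) \<and>
     (\<forall>i\<in>{1..2*m+1}. 0 \<le> t i \<and> t i * of_int (lam i) = s i - s j) \<and> sum t {1..2*m+1} \<le> 1"
proof -
  define I where "I = {1..2*m+1}"
  have finI: "finite I" and cI: "card I = 2*m+1" by (auto simp: I_def)
  define cnt where "cnt v = card {i\<in>I. s i \<le> v}" for v
  define A where "A = {v \<in> s ` I. m+1 \<le> cnt v}"
  have finA: "finite A" using finI by (simp add: A_def)
  have "Max (s ` I) \<in> A"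
  proof -
    have ne: "s ` I \<noteq> {}" by (auto simp: I_def)
    have "{i\<in>I. s i \<le> Max (s ` I)} = I" using finI by auto
    then show ?thesis using ne finI cI by (simp add: A_def cnt_def)
  qed
  then have neA: "A \<noteq> {}" by auto
  define c where "c = Min A"
  have cA: "c \<in> A" using finA neA by (simp add: c_def)
  then obtain j where j: "j \<in> I" "s j = c" by (auto simp: A_def)
  have cntc: "m+1 \<le> cnt c" using cA by (simp add: A_def)
  define L where "L = {i\<in>I. s i < c}"
  define U where "U = {i\<in>I. s i > c}"
  define E where "E = {i\<in>I. s i = c} - {j}"
  have finL: "finite L" and finU: "finite U" and finE: "finite E" using finI by (auto simp: L_def U_def E_def)
  have cL: "card L \<le> m"
  proof (rule ccontr)
    assume "\<not> card L \<le> m"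
    then have big: "m+1 \<le> card L" by simp
    then have neL: "L \<noteq> {}" by auto
    define c' where "c' = Max (s ` L)"
    have c'L: "c' \<in> s ` L" using neL finL by (simp add: c'_def)
    then have "c' < c" by (auto simp: L_def)
    have "L \<subseteq> {i\<in>I. s i \<le> c'}" using finL by (auto simp: c'_def L_def)
    then have "card L \<le> cnt c'" unfolding cnt_def by (rule card_mono[rotated]) (simp add: finI)
    moreover have "c' \<in> s ` I" using c'L by (auto simp: L_def)
    ultimately have "c' \<in> A" using big by (simp add: A_def)
    then have "c \<le> c'" using finA by (simp add: c_def)
    then show False using \<open>c' < c\<close> by simp
  qed
  have cU: "card U \<le> m"
  proof -
    have "U = I - {i\<in>I. s i \<le> c}" by (auto simp: U_def)
    then have "card U = card I - cnt c" using finI by (simp add: card_Diff_subset cnt_def)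
    then show ?thesis using cI cntc by simp
  qed
  have part: "I - {j} = L \<union> U \<union> E" using j by (auto simp: L_def U_def E_def)
  have dLU: "L \<inter> U = {}" and dLE: "L \<inter> E = {}" and dUE: "U \<inter> E = {}"
    by (auto simp: L_def U_def E_def)
  have "card (I - {j}) = 2*m" using j cI finI by simp
  then have csum: "card L + card U + card E = 2*m"
    using part dLU dLE dUE finL finU finE by (simp add: card_Un_disjoint Int_Un_distrib2)
  have "m - card U \<le> card E" using csum cL by linarith
  then obtain Ep where Ep: "Ep \<subseteq> E" "card Ep = m - card U" "finite Ep"
    by (rule obtain_subset_with_card_n)
  define P where "P = U \<union> Ep"
  define M where "M = L \<union> (E - Ep)"
  have cP: "card P = m" using Ep dUE finU cU unfolding P_def
    by (subst card_Un_disjoint) auto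
  have "card (E - Ep) = card E - card Ep" using Ep by (simp add: card_Diff_subset)
  then have cM: "card M = m" using Ep dLE finL finE csum cU unfolding M_def
    by (subst card_Un_disjoint) auto
  have PM: "P \<inter> M = {}" using dLU dLE dUE Ep by (auto simp: P_def M_def)
  have PI: "P \<subseteq> I - {j}" and MI: "M \<subseteq> I - {j}" using part Ep by (auto simp: P_def M_def)
  have PMI: "P \<union> M = I - {j}" using part Ep by (auto simp: P_def M_def)
  define lam :: "nat \<Rightarrow> int" where "lam i = (if i \<in> P then 1 else if i \<in> M then -1 else 0)" for i
  have lam_alt: "lam i = (if i \<in> P then 1 else 0) - (if i \<in> M then 1 else 0)" for i
    using PM by (auto simp: lam_def)
  have "(\<Sum>i\<in>I. lam i) = int (card P) - int (card M)"
  proof -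
    have "(\<Sum>i\<in>I. lam i) = (\<Sum>i\<in>I. (if i \<in> P then 1 else 0)) - (\<Sum>i\<in>I. (if i \<in> M then 1 else 0))"
      by (simp add: lam_alt sum_subtractf)
    also have "(\<Sum>i\<in>I. (if i \<in> P then 1 else 0)) = int (card (I \<inter> P))"
      using finI by (simp add: sum.If_cases)
    also have "(\<Sum>i\<in>I. (if i \<in> M then 1 else 0)) = int (card (I \<inter> M))"
      using finI by (simp add: sum.If_cases)
    also have "I \<inter> P = P" using PI by auto
    also have "I \<inter> M = M" using MI by auto
    finally show ?thesis .
  qed
  then have sum0: "(\<Sum>i\<in>I. lam i) = 0" using cP cM by simp
  have lamLam: "lam \<in> Lam j (2*m+1)"
    unfolding Lam_def
  proof (intro CollectI conjI ballI allI impI)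
    show "lam j = 0"
    proof -
      have "j \<notin> P" "j \<notin> M" using PI MI by auto
      then show ?thesis by (simp add: lam_def)
    qed
    show "lam i \<in> {- 1, 1}" if "i \<in> {1..2*m+1} - {j}" for i
    proof -
      have "i \<in> P \<union> M" using that PMI unfolding I_def by simp
      then show ?thesis by (auto simp: lam_def)
    qed
    show "lam i = 0" if "i \<notin> {1..2*m+1}" for i
    proof -
      have "i \<notin> P" "i \<notin> M" using that PI MI unfolding I_def by auto
      then show ?thesis by (simp add: lam_def)
    qed
    show "(\<Sum>i=1..2*m+1. lam i) = 0" using sum0 unfolding I_def .
  qed
  define t where "t i = \<bar>s i - c\<bar>" for i
  have key: "\<bar>s i - c\<bar> = of_int (lam i) * (s i - c)" and key2: "t i * of_int (lam i) = s i - s j"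
    if i: "i \<in> I" for i
  proof -
    consider "i = j" | "i \<in> L" | "i \<in> U" | "i \<in> E" using i part by blast
    then have "\<bar>s i - c\<bar> = of_int (lam i) * (s i - c) \<and> t i * of_int (lam i) = s i - s j"
    proof cases
      case 1 then show ?thesis using j by (simp add: t_def)
    next
      case 2
      then have "i \<in> M" "i \<notin> P" using PM by (auto simp: M_def)
      then show ?thesis using 2 j by (auto simp: lam_def t_def L_def)
    next
      case 3
      then have "i \<in> P" by (auto simp: P_def)
      then show ?thesis using 3 j by (auto simp: lam_def t_def U_def)
    next
      case 4
      then have "s i = c" by (auto simp: E_def)
      then show ?thesis using j by (simp add: t_def)
    qed
    then show "\<bar>s i - c\<bar> = of_int (lam i) * (s i - c)" "t i * of_int (lam i) = s i - s j" by auto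
  qed
  have "sum t I \<le> 1"
  proof -
    have "sum t I = (\<Sum>i\<in>I. of_int (lam i) * (s i - c))" using key by (simp add: t_def)
    also have "\<dots> = (\<Sum>i\<in>I. of_int (lam i) * s i) - c * (\<Sum>i\<in>I. of_int (lam i))"
      by (simp add: algebra_simps sum_subtractf sum_distrib_left)
    also have "(\<Sum>i\<in>I. (of_int (lam i) :: real)) = 0" using sum0 by (metis of_int_0 of_int_sum)
    also have "(\<Sum>i\<in>I. of_int (lam i) * s i) \<le> (\<Sum>i\<in>I. \<bar>s i\<bar>)"
    proof (rule sum_mono)
      fix i assume "i \<in> I"
      have "lam i = -1 \<or> lam i = 0 \<or> lam i = 1" using Lam_vals[OF lamLam] by blast
      then show "of_int (lam i) * s i \<le> \<bar>s i\<bar>" by auto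
    qed
    finally show ?thesis using S by (simp add: I_def)
  qed
  moreover have "\<forall>i\<in>I. 0 \<le> t i \<and> t i * of_int (lam i) = s i - s j" using key2 by (simp add: t_def)
  ultimately have "j \<in> {1..2*m+1} \<and> lam \<in> Lam j (2*m+1) \<and>
     (\<forall>i\<in>{1..2*m+1}. 0 \<le> t i \<and> t i * of_int (lam i) = s i - s j) \<and> sum t {1..2*m+1} \<le> 1"
    using j lamLam unfolding I_def by auto
  then show ?thesis by (intro exI[of _ j] exI[of _ lam] exI[of _ t])
qed


lemma roots_fin: "finite (cyc_roots :: (real^'n::{finite,linorder}) set)"
proof -
  have "(cyc_roots :: (real,'n) vec set) \<subseteq> wv ` {1..CARD('n)+1} \<union> (\<lambda>i. - wv i) ` {1..CARD('n)+1}"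
    by (auto simp: roots_char)
  then show ?thesis by (rule finite_subset) auto
qed

lemma roots_R:
  assumes lam: "lam \<in> Lam j (CARD('n::{finite,linorder})+1)" and j: "j \<in> {1..CARD('n)+1}"
    and h: "\<forall>i\<in>{1..CARD('n)+1}. (h::(real,'n) vec) \<bullet> wv i = of_int (lam i)"
  shows "\<forall>r\<in>cyc_roots. h \<bullet> r \<le> 1" and "{r\<in>cyc_roots. h \<bullet> r = 1} = Vs j lam"
proof -
  show "\<forall>r\<in>cyc_roots. h \<bullet> r \<le> 1"
  proof
    fix r :: "(real,'n) vec" assume "r \<in> cyc_roots"
    then obtain i where i: "i \<in> {1..CARD('n)+1}" and r: "r = wv i \<or> r = - wv i" by (auto simp: roots_char)
    have "lam i = -1 \<or> lam i = 0 \<or> lam i = 1" by (rule Lam_vals[OF lam])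
    then show "h \<bullet> r \<le> 1" using r h i by auto
  qed
  show "{r\<in>cyc_roots. h \<bullet> r = 1} = Vs j lam"
  proof (intro equalityI subsetI)
    fix r :: "(real,'n) vec" assume "r \<in> {r\<in>cyc_roots. h \<bullet> r = 1}"
    then have rr: "r \<in> cyc_roots" and hr: "h \<bullet> r = 1" by auto
    then obtain i where i: "i \<in> {1..CARD('n)+1}" and r: "r = wv i \<or> r = - wv i" by (auto simp: roots_char)
    have v: "lam i = -1 \<or> lam i = 0 \<or> lam i = 1" by (rule Lam_vals[OF lam])
    have hi: "h \<bullet> wv i = of_int (lam i)" using h i by blast
    have "i \<noteq> j" using Lam_j[OF lam] r hr hi by auto
    moreover have "r = lv lam i" using r hr hi v by (auto simp: lv_def)
    ultimately show "r \<in> Vs j lam" using i by (auto simp: Vs_def)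
  next
    fix r :: "(real,'n) vec" assume "r \<in> Vs j lam"
    then obtain i where r: "r = lv lam i" and i: "i \<in> {1..CARD('n)+1} - {j}" unfolding Vs_def by (rule imageE)
    have v: "lam i = -1 \<or> lam i = 1" by (rule Lam_nz[OF lam i])
    have hi: "h \<bullet> wv i = of_int (lam i)" using h i by blast
    have "r = wv i \<or> r = - wv i" using v r by (auto simp: lv_def)
    then have "r \<in> cyc_roots" using i by (auto simp: roots_char)
    moreover have "h \<bullet> r = 1" using v r hi by (auto simp: lv_def)
    ultimately show "r \<in> {r\<in>cyc_roots. h \<bullet> r = 1}" by simp
  qed
qed

lemma inner_lvsum:
  "(h::(real,'n::{finite,linorder}) vec) \<bullet> (\<Sum>i\<in>A. t i *\<^sub>R lv lam i) = (\<Sum>i\<in>A. t i * (of_int (lam i) * (h \<bullet> wv i)))"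
  by (simp add: inner_sum_right lv_def mult.assoc)

lemma env:
  assumes lam: "lam \<in> Lam j (CARD('n::{finite,linorder})+1)" and j: "j \<in> {1..CARD('n)+1}"
    and mu: "mu \<in> Lam k (CARD('n)+1)"
    and h1: "\<forall>i\<in>{1..CARD('n)+1}. (h1::(real,'n) vec) \<bullet> wv i = of_int (lam i)"
    and h2: "\<forall>i\<in>{1..CARD('n)+1}. (h2::(real,'n) vec) \<bullet> wv i = of_int (mu i)"
    and x: "x \<in> G0 j lam"
  shows "h2 \<bullet> x \<le> h1 \<bullet> x"
proof -
  let ?N = "{1..CARD('n)+1}"
  obtain t where t: "\<forall>i\<in>?N. 0 \<le> t i" "sum t ?N \<le> 1" "x = (\<Sum>i\<in>?N. t i *\<^sub>R lv lam i)"
    using x G0_char[OF lam j] by blast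
  have "h2 \<bullet> x = (\<Sum>i\<in>?N. t i * (of_int (lam i) * (h2 \<bullet> wv i)))"
    by (simp only: t(3) inner_lvsum)
  also have "\<dots> = (\<Sum>i\<in>?N. t i * (of_int (lam i) * of_int (mu i)))"
    by (rule sum.cong) (simp_all add: h2)
  also have "\<dots> \<le> (\<Sum>i\<in>?N. t i * (of_int (lam i) * of_int (lam i)))"
  proof (rule sum_mono)
    fix i assume i: "i \<in> ?N"
    have "lam i = -1 \<or> lam i = 0 \<or> lam i = 1" by (rule Lam_vals[OF lam])
    moreover have "mu i = -1 \<or> mu i = 0 \<or> mu i = 1" by (rule Lam_vals[OF mu])
    ultimately have "(of_int (lam i) * of_int (mu i) :: real) \<le> of_int (lam i) * of_int (lam i)" by auto
    then show "t i * (of_int (lam i) * of_int (mu i)) \<le> t i * (of_int (lam i) * of_int (lam i))"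
      by (rule mult_left_mono) (use t(1) i in auto)
  qed
  also have "\<dots> = (\<Sum>i\<in>?N. t i * (of_int (lam i) * (h1 \<bullet> wv i)))"
    by (rule sum.cong) (simp_all add: h1)
  also have "\<dots> = h1 \<bullet> x" by (simp only: t(3) inner_lvsum)
  finally show ?thesis .
qed

lemma inter_eq:
  assumes lam: "lam \<in> Lam j (CARD('n::{finite,linorder})+1)" and j: "j \<in> {1..CARD('n)+1}"
    and mu: "mu \<in> Lam k (CARD('n)+1)" and k: "k \<in> {1..CARD('n)+1}"
    and h1: "\<forall>i\<in>{1..CARD('n)+1}. (h1::(real,'n) vec) \<bullet> wv i = of_int (lam i)"
    and h2: "\<forall>i\<in>{1..CARD('n)+1}. (h2::(real,'n) vec) \<bullet> wv i = of_int (mu i)"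
  shows "G0 j lam \<inter> G0 k mu = G0 j lam \<inter> {x. (h1 - h2) \<bullet> x = 0}"
proof (intro equalityI subsetI)
  fix x :: "(real,'n) vec" assume x: "x \<in> G0 j lam \<inter> G0 k mu"
  have "h2 \<bullet> x \<le> h1 \<bullet> x" using env[OF lam j mu h1 h2] x by blast
  moreover have "h1 \<bullet> x \<le> h2 \<bullet> x" using env[OF mu k lam h2 h1] x by blast
  ultimately show "x \<in> G0 j lam \<inter> {x. (h1 - h2) \<bullet> x = 0}" using x by (simp add: inner_diff_left)
next
  let ?N = "{1..CARD('n)+1}"
  fix x :: "(real,'n) vec" assume x: "x \<in> G0 j lam \<inter> {x. (h1 - h2) \<bullet> x = 0}"
  then have xG: "x \<in> G0 j lam" and eq: "h1 \<bullet> x = h2 \<bullet> x" by (auto simp: inner_diff_left)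
  obtain t where t: "\<forall>i\<in>?N. 0 \<le> t i" "sum t ?N \<le> 1" "x = (\<Sum>i\<in>?N. t i *\<^sub>R lv lam i)"
    using xG G0_char[OF lam j] by blast
  define L where "L i = (of_int (lam i) :: real)" for i
  define M where "M i = (of_int (mu i) :: real)" for i
  have vL: "L i = -1 \<or> L i = 0 \<or> L i = 1" for i using Lam_vals[OF lam, of i] by (auto simp: L_def)
  have vM: "M i = -1 \<or> M i = 0 \<or> M i = 1" for i using Lam_vals[OF mu, of i] by (auto simp: M_def)
  have a1: "h1 \<bullet> x = (\<Sum>i\<in>?N. t i * (L i * L i))"
    unfolding t(3) inner_lvsum by (rule sum.cong) (simp_all add: h1 L_def)
  have a2: "h2 \<bullet> x = (\<Sum>i\<in>?N. t i * (L i * M i))"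
    unfolding t(3) inner_lvsum by (rule sum.cong) (simp_all add: h2 L_def M_def)
  have "h1 \<bullet> x - h2 \<bullet> x = (\<Sum>i\<in>?N. t i * (L i * L i - L i * M i))"
    unfolding a1 a2 by (simp add: sum_subtractf[symmetric] algebra_simps)
  then have s0: "(\<Sum>i\<in>?N. t i * (L i * L i - L i * M i)) = 0" using eq by simp
  have nn: "\<forall>i\<in>?N. 0 \<le> t i * (L i * L i - L i * M i)"
  proof
    fix i assume "i \<in> ?N"
    then have "0 \<le> t i" using t(1) by blast
    moreover have "0 \<le> L i * L i - L i * M i" using vL[of i] vM[of i] by auto
    ultimately show "0 \<le> t i * (L i * L i - L i * M i)" by simp
  qed
  have zz: "\<forall>i\<in>?N. t i * (L i * L i - L i * M i) = 0"
    using sum_nonneg_eq_0_iff[of ?N "\<lambda>i. t i * (L i * L i - L i * M i)"] s0 nn by blast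
  have z: "t i * (L i * L i - L i * M i) = 0" if "i \<in> ?N" for i
    using zz that by blast
  define t' where "t' i = (if lam i = mu i then t i else 0)" for i
  have trm: "t i *\<^sub>R lv lam i = t' i *\<^sub>R lv mu i" if i: "i \<in> ?N" for i
  proof (cases "lam i = mu i")
    case True then show ?thesis by (simp add: t'_def lv_def)
  next
    case False
    then have "L i \<noteq> M i" by (simp add: L_def M_def)
    then have "t i * L i = 0" using z[OF i] vL[of i] vM[of i] by auto
    then have "t i *\<^sub>R lv lam i = 0" by (simp add: lv_def L_def)
    then show ?thesis using False by (simp add: t'_def)
  qed
  have "x = (\<Sum>i\<in>?N. t' i *\<^sub>R lv mu i)" unfolding t(3) by (rule sum.cong[OF refl trm])
  moreover have "\<forall>i\<in>?N. 0 \<le> t' i" using t(1) by (simp add: t'_def)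
  moreover have "sum t' ?N \<le> 1"
  proof -
    have "sum t' ?N \<le> sum t ?N" using t(1) by (intro sum_mono) (simp add: t'_def)
    then show ?thesis using t(2) by simp
  qed
  ultimately have "(\<forall>i\<in>?N. 0 \<le> t' i) \<and> sum t' ?N \<le> 1 \<and> x = (\<Sum>i\<in>?N. t' i *\<^sub>R lv mu i)" by blast
  then have "x \<in> G0 k mu" unfolding G0_char[OF mu k] by (rule exI[of _ t'])
  then show "x \<in> G0 j lam \<inter> G0 k mu" using xG by simp
qed

lemma face_pair:
  assumes lam: "lam \<in> Lam j (CARD('n::{finite,linorder})+1)" and j: "j \<in> {1..CARD('n)+1}"
    and mu: "mu \<in> Lam k (CARD('n)+1)" and k: "k \<in> {1..CARD('n)+1}"
  shows "(G0 j lam \<inter> G0 k mu :: (real,'n) vec set) face_of G0 j lam"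
proof -
  obtain h1 :: "(real,'n) vec" where h1: "\<forall>i\<in>{1..CARD('n)+1}. h1 \<bullet> wv i = of_int (lam i)"
    using dual_lam[OF lam] by blast
  obtain h2 :: "(real,'n) vec" where h2: "\<forall>i\<in>{1..CARD('n)+1}. h2 \<bullet> wv i = of_int (mu i)"
    using dual_lam[OF mu] by blast
  have "G0 j lam \<inter> {x. (h1 - h2) \<bullet> x = 0} face_of G0 j lam"
  proof (rule face_of_Int_supporting_hyperplane_ge)
    show "convex (G0 j lam)" by (simp add: G0_def)
    show "\<And>x. x \<in> G0 j lam \<Longrightarrow> 0 \<le> (h1 - h2) \<bullet> x"
      using env[OF lam j mu h1 h2] by (simp add: inner_diff_left)
  qed
  then show ?thesis using inter_eq[OF lam j mu k h1 h2] by simp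
qed


declare sum.cl_ivl_Suc[simp del] prod.cl_ivl_Suc[simp del]

lemma zero_in_PC: "(0::(real,'n::{finite,linorder}) vec) \<in> P_C"
proof -
  have r1: "(wv 1 :: (real,'n) vec) \<in> cyc_roots" and r2: "- (wv 1 :: (real,'n) vec) \<in> cyc_roots"
    by (auto simp: roots_char intro!: bexI[of _ 1])
  have "(1/2::real) *\<^sub>R (wv 1 :: (real,'n) vec) + (1/2::real) *\<^sub>R (- wv 1) \<in> P_C"
    unfolding P_C_def by (rule convexD[OF convex_convex_hull]) (use r1 r2 in \<open>auto intro: hull_inc\<close>)
  then show ?thesis by simp
qed

lemma G0_sub_PC:
  assumes lam: "lam \<in> Lam j (CARD('n::{finite,linorder})+1)" and j: "j \<in> {1..CARD('n)+1}"
  shows "(G0 j lam :: (real,'n) vec set) \<subseteq> P_C"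
proof -
  obtain h :: "(real,'n) vec" where h: "\<forall>i\<in>{1..CARD('n)+1}. h \<bullet> wv i = of_int (lam i)"
    using dual_lam[OF lam] by blast
  have "Vs j lam \<subseteq> (cyc_roots :: (real,'n) vec set)" using roots_R(2)[OF lam j h] by blast
  then have "insert 0 (Vs j lam) \<subseteq> (P_C :: (real,'n) vec set)"
    using zero_in_PC unfolding P_C_def by (auto intro: hull_inc)
  then show ?thesis unfolding G0_Vs P_C_def by (rule hull_minimal) simp
qed

lemma PC_rep:
  assumes x: "(x::(real,'n::{finite,linorder}) vec) \<in> P_C"
  shows "\<exists>s. (\<Sum>i\<in>{1..CARD('n)+1}. \<bar>s i\<bar>) \<le> 1 \<and> x = (\<Sum>i\<in>{1..CARD('n)+1}. s i *\<^sub>R wv i)"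
proof -
  let ?N = "{1..CARD('n)+1}"
  define Z where "Z = {x::(real,'n) vec. \<exists>s. (\<Sum>i\<in>?N. \<bar>s i\<bar>) \<le> 1 \<and> x = (\<Sum>i\<in>?N. s i *\<^sub>R wv i)}"
  have "convex Z"
  proof (rule convexI)
    fix x y :: "(real,'n) vec" and u v :: real
    assume x: "x \<in> Z" and y: "y \<in> Z" and uv: "0 \<le> u" "0 \<le> v" "u + v = 1"
    obtain s where s: "(\<Sum>i\<in>?N. \<bar>s i\<bar>) \<le> 1" "x = (\<Sum>i\<in>?N. s i *\<^sub>R wv i)" using x unfolding Z_def by blast
    obtain s' where s': "(\<Sum>i\<in>?N. \<bar>s' i\<bar>) \<le> 1" "y = (\<Sum>i\<in>?N. s' i *\<^sub>R wv i)" using y unfolding Z_def by blast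
    have "(\<Sum>i\<in>?N. \<bar>u * s i + v * s' i\<bar>) \<le> (\<Sum>i\<in>?N. u * \<bar>s i\<bar> + v * \<bar>s' i\<bar>)"
    proof (rule sum_mono)
      fix i show "\<bar>u * s i + v * s' i\<bar> \<le> u * \<bar>s i\<bar> + v * \<bar>s' i\<bar>"
        using uv abs_triangle_ineq[of "u * s i" "v * s' i"] by (simp add: abs_mult)
    qed
    also have "\<dots> = u * (\<Sum>i\<in>?N. \<bar>s i\<bar>) + v * (\<Sum>i\<in>?N. \<bar>s' i\<bar>)"
      by (simp add: sum.distrib sum_distrib_left)
    also have "\<dots> \<le> u * 1 + v * 1" using s s' uv by (intro add_mono mult_left_mono) auto
    finally have b: "(\<Sum>i\<in>?N. \<bar>u * s i + v * s' i\<bar>) \<le> 1" using uv by simp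
    have e: "u *\<^sub>R x + v *\<^sub>R y = (\<Sum>i\<in>?N. (u * s i + v * s' i) *\<^sub>R wv i)"
      by (simp only: s(2) s'(2) scaleR_sum_right sum.distrib[symmetric] scaleR_add_left scaleR_scaleR)
    have "(\<Sum>i\<in>?N. \<bar>u * s i + v * s' i\<bar>) \<le> 1 \<and> u *\<^sub>R x + v *\<^sub>R y = (\<Sum>i\<in>?N. (u * s i + v * s' i) *\<^sub>R wv i)"
      using b e by blast
    then show "u *\<^sub>R x + v *\<^sub>R y \<in> Z" unfolding Z_def mem_Collect_eq by (rule exI[of _ "\<lambda>i. u * s i + v * s' i"])
  qed
  moreover have "cyc_roots \<subseteq> Z"
  proof
    fix r :: "(real,'n) vec" assume "r \<in> cyc_roots"
    then obtain k where k: "k \<in> ?N" and r: "r = wv k \<or> r = - wv k" by (auto simp: roots_char)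
    define c :: real where "c = (if r = wv k then 1 else -1)"
    have rc: "r = c *\<^sub>R wv k" using r by (auto simp: c_def)
    define s where "s i = (if i = k then c else 0)" for i
    have "(\<Sum>i\<in>?N. \<bar>s i\<bar>) = (\<Sum>i\<in>?N. if i = k then \<bar>c\<bar> else 0)"
      by (rule sum.cong) (auto simp: s_def)
    also have "\<dots> = 1" using k by (simp add: c_def)
    finally have a: "(\<Sum>i\<in>?N. \<bar>s i\<bar>) = 1" .
    have "(\<Sum>i\<in>?N. s i *\<^sub>R wv i) = (\<Sum>i\<in>?N. if i = k then c *\<^sub>R wv k else 0)"
      by (rule sum.cong) (auto simp: s_def)
    also have "\<dots> = r" using k rc by simp
    finally have "(\<Sum>i\<in>?N. \<bar>s i\<bar>) \<le> 1 \<and> r = (\<Sum>i\<in>?N. s i *\<^sub>R wv i)" using a by simp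
    then show "r \<in> Z" unfolding Z_def mem_Collect_eq by (rule exI[of _ s])
  qed
  ultimately have "P_C \<subseteq> Z" unfolding P_C_def by (rule hull_minimal[rotated])
  then show ?thesis using x unfolding Z_def by blast
qed

lemma PC_cover:
  assumes odd: "odd (CARD('n::{finite,linorder}) + 1)" and x: "(x::(real,'n) vec) \<in> P_C"
  shows "\<exists>j lam. j \<in> {1..CARD('n)+1} \<and> lam \<in> Lam j (CARD('n)+1) \<and> x \<in> G0 j lam"
proof -
  let ?N = "{1..CARD('n)+1}"
  obtain s where s: "(\<Sum>i\<in>?N. \<bar>s i\<bar>) \<le> 1" "x = (\<Sum>i\<in>?N. s i *\<^sub>R wv i)"
    using PC_rep[OF x] by blast
  define m where "m = CARD('n) div 2"
  have Nm: "CARD('n) + 1 = 2*m+1" using odd by (simp add: m_def)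
  obtain j lam t where jl: "j \<in> {1..2*m+1}" "lam \<in> Lam j (2*m+1)"
    "\<forall>i\<in>{1..2*m+1}. 0 \<le> t i \<and> t i * of_int (lam i) = s i - s j" "sum t {1..2*m+1} \<le> 1"
    using median[of s m] s(1) unfolding Nm by blast
  have j: "j \<in> ?N" and lam: "lam \<in> Lam j (CARD('n)+1)" and t: "\<forall>i\<in>?N. 0 \<le> t i \<and> t i * of_int (lam i) = s i - s j"
    and st: "sum t ?N \<le> 1" using jl unfolding Nm by auto
  have "(\<Sum>i\<in>?N. s j *\<^sub>R (wv i :: (real,'n) vec)) = 0"
    using sum_wv[where 'n='n] by (simp add: scaleR_sum_right[symmetric])
  then have "x = (\<Sum>i\<in>?N. s i *\<^sub>R wv i) - (\<Sum>i\<in>?N. s j *\<^sub>R wv i)" using s(2) by simp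
  also have "\<dots> = (\<Sum>i\<in>?N. (s i - s j) *\<^sub>R wv i)" by (simp add: sum_subtractf[symmetric] scaleR_diff_left)
  also have "\<dots> = (\<Sum>i\<in>?N. t i *\<^sub>R lv lam i)"
    by (rule sum.cong) (use t in \<open>auto simp: lv_def\<close>)
  finally have "(\<forall>i\<in>?N. 0 \<le> t i) \<and> sum t ?N \<le> 1 \<and> x = (\<Sum>i\<in>?N. t i *\<^sub>R lv lam i)" using t st by blast
  then have "x \<in> G0 j lam" unfolding G0_char[OF lam j] by (rule exI[of _ t])
  then show ?thesis using j lam by blast
qed

lemma Delta_memE:
  assumes "T \<in> (Delta :: ((real,'n::{finite,linorder}) vec) set set)"
  obtains j lam where "j \<in> {1..CARD('n)+1}" "lam \<in> Lam j (CARD('n)+1)" "T = G0 j lam"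
  using assms unfolding Delta_def by blast

lemma triang:
  assumes odd: "odd (CARD('n::{finite,linorder}) + 1)"
  shows "is_triangulation (Delta :: ((real,'n) vec) set set) P_C"
  unfolding is_triangulation_def
proof (intro conjI ballI)
  have "(Delta :: (real,'n) vec set set) \<subseteq> (\<lambda>X. convex hull (insert 0 X)) ` Pow cyc_roots"
  proof
    fix T :: "(real,'n) vec set" assume "T \<in> Delta"
    then obtain j lam where j: "j \<in> {1..CARD('n)+1}" and lam: "lam \<in> Lam j (CARD('n)+1)" and T: "T = G0 j lam"
      by (rule Delta_memE)
    obtain h :: "(real,'n) vec" where h: "\<forall>i\<in>{1..CARD('n)+1}. h \<bullet> wv i = of_int (lam i)"
      using dual_lam[OF lam] by blast
    have "Vs j lam \<subseteq> (cyc_roots :: (real,'n) vec set)" using roots_R(2)[OF lam j h] by blast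
    then show "T \<in> (\<lambda>X. convex hull (insert 0 X)) ` Pow cyc_roots" unfolding T G0_Vs by blast
  qed
  then show "finite (Delta :: (real,'n) vec set set)" by (rule finite_subset) (simp add: roots_fin)
next
  fix T :: "(real,'n) vec set" assume "T \<in> Delta"
  then obtain j lam where j: "j \<in> {1..CARD('n)+1}" and lam: "lam \<in> Lam j (CARD('n)+1)" and T: "T = G0 j lam"
    by (rule Delta_memE)
  show "int CARD('n) simplex T" unfolding T G0_Vs
    by (rule simplex_convex_hull) (use simplex_facts[OF lam j] in simp)
next
  show "\<Union> (Delta :: (real,'n) vec set set) = P_C"
  proof (intro equalityI subsetI)
    fix x :: "(real,'n) vec" assume "x \<in> \<Union> Delta"
    then obtain T where T: "T \<in> Delta" "x \<in> T" by blast
    obtain j lam where j: "j \<in> {1..CARD('n)+1}" and lam: "lam \<in> Lam j (CARD('n)+1)" and e: "T = G0 j lam"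
      using T(1) by (rule Delta_memE)
    show "x \<in> P_C" using G0_sub_PC[OF lam j] T(2) e by blast
  next
    fix x :: "(real,'n) vec" assume "x \<in> P_C"
    then obtain j lam where "j \<in> {1..CARD('n)+1}" "lam \<in> Lam j (CARD('n)+1)" "x \<in> G0 j lam"
      using PC_cover[OF odd] by blast
    then show "x \<in> \<Union> Delta" unfolding Delta_def by blast
  qed
next
  fix T1 T2 :: "(real,'n) vec set" assume T1: "T1 \<in> Delta" and T2: "T2 \<in> Delta"
  obtain j lam where j: "j \<in> {1..CARD('n)+1}" and lam: "lam \<in> Lam j (CARD('n)+1)" and e1: "T1 = G0 j lam"
    using T1 by (rule Delta_memE)
  obtain k mu where k: "k \<in> {1..CARD('n)+1}" and mu: "mu \<in> Lam k (CARD('n)+1)" and e2: "T2 = G0 k mu"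
    using T2 by (rule Delta_memE)
  show "T1 \<inter> T2 face_of T1" unfolding e1 e2 by (rule face_pair[OF lam j mu k])
  show "T1 \<inter> T2 face_of T2" unfolding e1 e2 Int_commute[of "G0 j lam"] by (rule face_pair[OF mu k lam j])
qed


declare sum.cl_ivl_Suc[simp del] prod.cl_ivl_Suc[simp del]

lemma exposed_hull:
  fixes S :: "'a::euclidean_space set"
  assumes hS: "\<forall>s\<in>S. b \<le> u \<bullet> s"
  shows "{p \<in> convex hull S. u \<bullet> p = b} = convex hull {s\<in>S. u \<bullet> s = b}"
proof (intro equalityI subsetI)
  fix p assume "p \<in> convex hull {s\<in>S. u \<bullet> s = b}"
  moreover have "convex hull {s\<in>S. u \<bullet> s = b} \<subseteq> convex hull S" by (rule hull_mono) auto
  moreover have "convex hull {s\<in>S. u \<bullet> s = b} \<subseteq> {x. u \<bullet> x = b}"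
    by (rule hull_minimal) (auto simp: convex_hyperplane)
  ultimately show "p \<in> {p \<in> convex hull S. u \<bullet> p = b}" by blast
next
  fix p assume p: "p \<in> {p \<in> convex hull S. u \<bullet> p = b}"
  then obtain T w where T: "finite T" "T \<subseteq> S" "\<forall>x\<in>T. 0 \<le> w x" "sum w T = 1" "(\<Sum>v\<in>T. w v *\<^sub>R v) = p"
    unfolding convex_hull_explicit by blast
  have up: "u \<bullet> p = b" using p by simp
  have "(\<Sum>v\<in>T. w v * (u \<bullet> v - b)) = (\<Sum>v\<in>T. w v * (u \<bullet> v)) - b * sum w T"
    by (simp add: algebra_simps sum_subtractf sum_distrib_left)
  also have "(\<Sum>v\<in>T. w v * (u \<bullet> v)) = u \<bullet> p" using T(5) by (auto simp: inner_sum_right)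
  finally have s0: "(\<Sum>v\<in>T. w v * (u \<bullet> v - b)) = 0" using up T(4) by simp
  have nn: "\<forall>v\<in>T. 0 \<le> w v * (u \<bullet> v - b)" using T(2,3) hS by auto
  have z: "\<forall>v\<in>T. w v * (u \<bullet> v - b) = 0"
    using sum_nonneg_eq_0_iff[of T "\<lambda>v. w v * (u \<bullet> v - b)"] s0 nn T(1) by blast
  define T' where "T' = {v\<in>T. u \<bullet> v = b}"
  have wz: "\<forall>v\<in>T - T'. w v = 0" using z by (auto simp: T'_def)
  have sw: "sum w T' = 1"
  proof -
    have "sum w T' = sum w T" by (rule sum.mono_neutral_left) (use T(1) wz in \<open>auto simp: T'_def\<close>)
    then show ?thesis using T(4) by simp
  qed
  have sp: "(\<Sum>v\<in>T'. w v *\<^sub>R v) = p"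
  proof -
    have "(\<Sum>v\<in>T'. w v *\<^sub>R v) = (\<Sum>v\<in>T. w v *\<^sub>R v)"
      by (rule sum.mono_neutral_left) (use T(1) wz in \<open>auto simp: T'_def\<close>)
    then show ?thesis using T(5) by simp
  qed
  have "(\<Sum>v\<in>T'. w v *\<^sub>R v) \<in> convex hull {s\<in>S. u \<bullet> s = b}"
  proof (rule convex_sum)
    show "finite T'" using T(1) by (simp add: T'_def)
    show "convex (convex hull {s\<in>S. u \<bullet> s = b})" by simp
    show "sum w T' = 1" by (rule sw)
    show "\<And>i. i \<in> T' \<Longrightarrow> 0 \<le> w i" using T(3) by (auto simp: T'_def)
    show "\<And>i. i \<in> T' \<Longrightarrow> i \<in> convex hull {s\<in>S. u \<bullet> s = b}"
      using T(2) by (auto simp: T'_def intro!: hull_inc)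
  qed
  then show "p \<in> convex hull {s\<in>S. u \<bullet> s = b}" using sp by simp
qed

definition Qn :: "((real,'n::{finite,linorder}) vec \<times> real) set" where
  "Qn = lifted S_C (\<lambda>a. if a = 0 then 0 else 1)"

definition Gn :: "((real,'n::{finite,linorder}) vec \<times> real) set" where
  "Gn = insert (0,0) ((\<lambda>r. (r,1)) ` cyc_roots)"

lemma wv_nz:
  assumes i: "i \<in> {1..CARD('n::{finite,linorder})+1}"
  shows "(wv i :: (real,'n) vec) \<noteq> 0"
proof -
  define j where "j = (if i = 1 then 2 else 1::nat)"
  have "CARD('n) \<ge> 1" by (simp add: Suc_leI)
  then have j: "j \<in> {1..CARD('n)+1}" "i \<noteq> j" using i by (auto simp: j_def)
  obtain g :: "(real,'n) vec" where g: "\<forall>k\<in>{1..CARD('n)+1} - {j}. g \<bullet> wv k = (if k = i then 1 else 0)"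
    using dual_delta[OF i j(1) j(2)] by blast
  then have "g \<bullet> wv i = 1" using i j by simp
  then show ?thesis by auto
qed

lemma zero_notin_roots: "(0::(real,'n::{finite,linorder}) vec) \<notin> cyc_roots"
proof
  assume "(0::(real,'n) vec) \<in> cyc_roots"
  then obtain i where i: "i \<in> {1..CARD('n)+1}" and "0 = (wv i :: (real,'n) vec) \<or> 0 = - (wv i :: (real,'n) vec)"
    by (auto simp: roots_char)
  then have "(wv i :: (real,'n) vec) = 0" by (metis neg_equal_0_iff_equal)
  then show False using wv_nz[OF i] by simp
qed

lemma Qn_eq: "(Qn :: ((real,'n::{finite,linorder}) vec \<times> real) set) = convex hull Gn"
proof -
  have "(\<lambda>a. (a, if a = 0 then 0 else 1::real)) ` (S_C :: (real,'n) vec set) = Gn"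
    unfolding S_C_def Gn_def using zero_notin_roots[where 'n='n] by (auto simp: image_iff)
  then show ?thesis by (simp add: Qn_def lifted_def)
qed

lemma Gn_sub_Qn: "Gn \<subseteq> (Qn :: ((real,'n::{finite,linorder}) vec \<times> real) set)"
  unfolding Qn_eq by (rule hull_subset)

lemma Lfac:
  assumes lam: "lam \<in> Lam j (CARD('n::{finite,linorder})+1)" and j: "j \<in> {1..CARD('n)+1}"
    and h: "\<forall>i\<in>{1..CARD('n)+1}. (h::(real,'n) vec) \<bullet> wv i = of_int (lam i)"
  shows "lower_facet Qn {p\<in>Qn. (-h, 1) \<bullet> p = 0}"
    and "fst ` {p\<in>(Qn::((real,'n) vec \<times> real) set). (-h, 1) \<bullet> p = 0} = G0 j lam"
    and "aff_dim (Qn::((real,'n) vec \<times> real) set) = int CARD('n) + 1"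
proof -
  let ?N = "{1..CARD('n)+1}"
  define u :: "(real,'n) vec \<times> real" where "u = (-h, 1)"
  define F where "F = {p\<in>(Qn::((real,'n) vec \<times> real) set). u \<bullet> p = 0}"
  have hR: "\<forall>r\<in>cyc_roots. h \<bullet> r \<le> 1" and hV: "{r\<in>cyc_roots. h \<bullet> r = 1} = Vs j lam"
    using roots_R[OF lam j h] by auto
  have hG: "\<forall>g\<in>Gn. 0 \<le> u \<bullet> g" using hR by (auto simp: Gn_def u_def inner_Pair)
  have hQ: "\<forall>p\<in>Qn. 0 \<le> u \<bullet> p"
  proof -
    have "convex hull Gn \<subseteq> {p. 0 \<le> u \<bullet> p}"
      by (rule hull_minimal) (use hG in \<open>auto simp: convex_halfspace_ge\<close>)
    then show ?thesis unfolding Qn_eq by blast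
  qed
  have GF: "{g\<in>Gn. u \<bullet> g = 0} = insert (0,0) ((\<lambda>r. (r,1)) ` Vs j lam)"
    unfolding hV[symmetric] by (auto simp: Gn_def u_def inner_Pair)
  have Fh: "F = convex hull (insert (0,0) ((\<lambda>r. (r,1)) ` Vs j lam))"
    unfolding F_def Qn_eq GF[symmetric] by (rule exposed_hull[OF hG])
  have fstF: "fst ` F = G0 j lam"
    unfolding Fh G0_Vs convex_hull_linear_image[OF linear_fst] by (simp add: image_image)
  have face: "F face_of Qn"
  proof -
    have "Qn \<inter> {p. u \<bullet> p = 0} face_of Qn"
      by (rule face_of_Int_supporting_hyperplane_ge) (use hQ in \<open>auto simp: Qn_eq\<close>)
    moreover have "Qn \<inter> {p. u \<bullet> p = 0} = F" by (auto simp: F_def)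
    ultimately show ?thesis by simp
  qed
  have ne: "F \<noteq> {}"
  proof -
    have "(0,0) \<in> Qn" using Gn_sub_Qn by (auto simp: Gn_def)
    then have "(0,0) \<in> F" by (simp add: F_def u_def)
    then show ?thesis by blast
  qed
  have sf: "\<not> affine_dependent (insert (0::(real,'n) vec) (Vs j lam))"
    and cf: "card (insert (0::(real,'n) vec) (Vs j lam)) = CARD('n) + 1"
    using simplex_facts[OF lam j] by auto
  have adG: "aff_dim (G0 j lam :: (real,'n) vec set) = int CARD('n)"
    unfolding G0_Vs aff_dim_convex_hull using aff_dim_affine_independent[OF sf] cf by simp
  have a1: "int CARD('n) \<le> aff_dim F"
    using aff_dim_linear_image_le[OF linear_fst, of F] fstF adG by simp
  have FQ: "F \<noteq> Qn"
  proof -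
    define i where "i = (if j = 1 then 2 else 1::nat)"
    have "CARD('n) \<ge> 1" by (simp add: Suc_leI)
    then have i: "i \<in> ?N - {j}" using j by (auto simp: i_def)
    have li: "lam i = -1 \<or> lam i = 1" by (rule Lam_nz[OF lam i])
    have hi: "h \<bullet> wv i = of_int (lam i)" using h i by blast
    have "- lv lam i \<in> (cyc_roots :: (real,'n) vec set)"
      using li i by (auto simp: lv_def roots_char)
    then have "(- lv lam i :: (real,'n) vec, 1::real) \<in> Gn" by (simp add: Gn_def)
    then have "(- lv lam i :: (real,'n) vec, 1::real) \<in> Qn" using Gn_sub_Qn by blast
    moreover have "u \<bullet> (- lv lam i :: (real,'n) vec, 1::real) = 2" using li hi by (auto simp: u_def inner_Pair lv_def)
    ultimately have "(- lv lam i :: (real,'n) vec, 1::real) \<notin> F" "(- lv lam i :: (real,'n) vec, 1::real) \<in> Qn"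
      by (auto simp: F_def)
    then show ?thesis by blast
  qed
  have a2: "aff_dim F < aff_dim (Qn :: ((real,'n) vec \<times> real) set)"
    by (rule face_of_aff_dim_lt) (use face FQ in \<open>auto simp: Qn_eq\<close>)
  have a3: "aff_dim (Qn :: ((real,'n) vec \<times> real) set) \<le> int CARD('n) + 1"
    using aff_dim_le_DIM[of "Qn :: ((real,'n) vec \<times> real) set"] by simp
  have aQ: "aff_dim (Qn :: ((real,'n) vec \<times> real) set) = int CARD('n) + 1" using a1 a2 a3 by linarith
  have aF: "aff_dim F = int CARD('n)" using a1 a2 a3 by linarith
  have "F facet_of Qn" unfolding facet_of_def using face ne aF aQ by simp
  moreover have "snd u > 0" by (simp add: u_def)
  ultimately have "lower_facet Qn F" unfolding lower_facet_def
    using hQ by (intro conjI exI[of _ u] exI[of _ "0::real"]) (auto simp: F_def)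
  then show "lower_facet Qn {p\<in>Qn. (-h, 1) \<bullet> p = 0}" by (simp add: F_def u_def)
  show "fst ` {p\<in>(Qn::((real,'n) vec \<times> real) set). (-h, 1) \<bullet> p = 0} = G0 j lam"
    using fstF by (simp add: F_def u_def)
  show "aff_dim (Qn::((real,'n) vec \<times> real) set) = int CARD('n) + 1" by (rule aQ)
qed


declare sum.cl_ivl_Suc[simp del] prod.cl_ivl_Suc[simp del]

lemma alt_sum: "(\<Sum>i=1..2*m. (-1::int)^i) = 0"
proof (induction m)
  case 0 then show ?case by simp
next
  case (Suc m)
  have "(\<Sum>i=1..2*Suc m. (-1::int)^i) = (\<Sum>i=1..Suc (Suc (2*m)). (-1::int)^i)" by simp
  also have "\<dots> = (\<Sum>i=1..2*m. (-1::int)^i) + (-1)^(Suc (2*m)) + (-1)^(Suc (Suc (2*m)))"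
    by (simp add: sum.cl_ivl_Suc)
  also have "\<dots> = 0" using Suc by simp
  finally show ?case .
qed

lemma lam0_exists:
  assumes odd: "odd (CARD('n::{finite,linorder}) + 1)"
  shows "\<exists>j lam. j \<in> {1..CARD('n)+1} \<and> lam \<in> Lam j (CARD('n)+1)"
proof -
  define lam :: "nat \<Rightarrow> int" where "lam i = (if 1 \<le> i \<and> i \<le> CARD('n) then (-1)^i else 0)" for i
  define m where "m = CARD('n) div 2"
  have nm: "CARD('n) = 2*m" using odd by (simp add: m_def)
  have "(\<Sum>i=1..CARD('n)+1. lam i) = (\<Sum>i=1..CARD('n). lam i) + lam (CARD('n)+1)"
    by (simp add: sum.cl_ivl_Suc)
  also have "(\<Sum>i=1..CARD('n). lam i) = (\<Sum>i=1..CARD('n). (-1)^i)"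
    by (rule sum.cong) (auto simp: lam_def)
  also have "\<dots> = 0" unfolding nm by (rule alt_sum)
  finally have s: "(\<Sum>i=1..CARD('n)+1. lam i) = 0" by (simp add: lam_def)
  have "lam \<in> Lam (CARD('n)+1) (CARD('n)+1)"
    unfolding Lam_def using s by (auto simp: lam_def minus_one_power_iff)
  then show ?thesis by (intro exI[of _ "CARD('n)+1"] exI[of _ lam]) simp
qed

lemma affQ:
  assumes odd: "odd (CARD('n::{finite,linorder}) + 1)"
  shows "aff_dim (Qn::((real,'n) vec \<times> real) set) = int CARD('n) + 1"
proof -
  obtain j lam where j: "j \<in> {1..CARD('n)+1}" and lam: "lam \<in> Lam j (CARD('n)+1)"
    using lam0_exists[OF odd] by blast
  obtain h :: "(real,'n) vec" where h: "\<forall>i\<in>{1..CARD('n)+1}. h \<bullet> wv i = of_int (lam i)"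
    using dual_lam[OF lam] by blast
  show ?thesis by (rule Lfac(3)[OF lam j h])
qed

lemma b_zero:
fixes u :: "(real,'n::{finite,linorder}) vec \<times> real" and F :: "((real,'n) vec \<times> real) set"
assumes aF: "aff_dim F = int CARD('n)" and c0: "snd u > 0" and FG: "F = convex hull {g\<in>Gn. u \<bullet> g = b}"
  and ble: "b \<le> 0"
shows "b = 0"proof (rule ccontr)
  assume "b \<noteq> 0"
  then have blt: "b < 0" using ble by simp
  define e :: "(real,'n) vec \<times> real" where "e = (0, 1)"
  define A where "A = {p. e \<bullet> p = 1} \<inter> {p. u \<bullet> p = b}"
  have "{g\<in>Gn. u \<bullet> g = b} \<subseteq> A"
  proof
    fix g assume g: "g \<in> {g\<in>Gn. u \<bullet> g = b}"
    then have gG: "g \<in> Gn" and ug: "u \<bullet> g = b" by auto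
    have "g \<noteq> 0" using ug blt by auto
    then obtain r where "g = (r, 1)" using gG by (auto simp: Gn_def zero_prod_def)
    then have "e \<bullet> g = 1" by (simp add: e_def inner_Pair)
    then show "g \<in> A" using ug by (simp add: A_def)
  qed
  then have "F \<subseteq> A" unfolding FG
    by (rule hull_minimal) (simp add: A_def convex_Int convex_hyperplane)
  then have le: "aff_dim F \<le> aff_dim A" by (rule aff_dim_subset)
  have e0: "e \<noteq> 0" by (simp add: e_def zero_prod_def)
  have ae: "aff_dim {p. e \<bullet> p = 1} = int CARD('n)"
    using aff_dim_hyperplane[OF e0, of 1] by simp
  have nsub: "\<not> {p. e \<bullet> p = 1} \<subseteq> {p. u \<bullet> p = b}"
  proof
    assume sub: "{p. e \<bullet> p = 1} \<subseteq> {p. u \<bullet> p = b}"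
    have "e \<bullet> e = 1" by (simp add: e_def inner_Pair)
    then have "u \<bullet> e = b" using sub by blast
    then have "snd u = b" by (cases u) (simp add: inner_Pair e_def)
    then show False using c0 blt by simp
  qed
  have "aff_dim A = (if {p. e \<bullet> p = 1} \<inter> {v. u \<bullet> v = b} = {} then - 1
     else if {p. e \<bullet> p = 1} \<subseteq> {v. u \<bullet> v = b} then aff_dim {p. e \<bullet> p = 1} else aff_dim {p. e \<bullet> p = 1} - 1)"
    unfolding A_def by (rule aff_dim_affine_Int_hyperplane[OF affine_hyperplane])
  then have "aff_dim A \<le> int CARD('n) - 1" using ae nsub by (simp split: if_splits)
  then show False using le aF by simp
qed


lemma conv_facet:
  assumes odd: "odd (CARD('n::{finite,linorder}) + 1)"
    and lf: "lower_facet (Qn::((real,'n) vec \<times> real) set) F"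
  shows "\<exists>j lam. j \<in> {1..CARD('n)+1} \<and> lam \<in> Lam j (CARD('n)+1) \<and> fst ` F = G0 j lam"
proof -
  let ?N = "{1..CARD('n)+1}"
  obtain u b where facet: "F facet_of Qn" and c0: "snd u > 0" and hQ: "\<forall>p\<in>Qn. b \<le> u \<bullet> p"
    and Fe: "F = {p\<in>Qn. u \<bullet> p = b}"
    using lf unfolding lower_facet_def by blast
  have aQ: "aff_dim (Qn::((real,'n) vec \<times> real) set) = int CARD('n) + 1" by (rule affQ[OF odd])
  have aF: "aff_dim F = int CARD('n)" using facet aQ by (simp add: facet_of_def)
  have hG: "\<forall>g\<in>Gn. b \<le> u \<bullet> g" using hQ Gn_sub_Qn by blast
  have FG: "F = convex hull {g\<in>Gn. u \<bullet> g = b}"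
    unfolding Fe Qn_eq by (rule exposed_hull[OF hG])
  have "((0::(real,'n) vec),(0::real)) \<in> Gn" by (simp add: Gn_def)
  then have "b \<le> u \<bullet> ((0::(real,'n) vec),(0::real))" using hG by blast
  then have ble: "b \<le> 0" by (simp add: zero_prod_def[symmetric])
  have b0: "b = 0" by (rule b_zero[OF aF c0 FG ble])
  define a where "a = fst u"
  define c where "c = snd u"
  define h where "h = - (1/c) *\<^sub>R a"
  have c0': "c > 0" using c0 by (simp add: c_def)
  have hu: "u \<bullet> p = c * ((-h, 1) \<bullet> p)" for p :: "(real,'n) vec \<times> real"
    using c0' by (cases u, cases p) (simp add: a_def c_def h_def inner_Pair algebra_simps)
  have Fh: "F = {p\<in>Qn. (-h, 1) \<bullet> p = 0}" unfolding Fe b0 using hu c0' by simp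
  have hR: "\<forall>r\<in>cyc_roots. h \<bullet> r \<le> 1"
  proof
    fix r :: "(real,'n) vec" assume "r \<in> cyc_roots"
    then have "(r, 1) \<in> Gn" by (simp add: Gn_def)
    then have "0 \<le> u \<bullet> (r,1)" using hG b0 by blast
    then have "0 \<le> (-h, 1) \<bullet> (r, 1::real)" using hu c0' by (simp add: zero_le_mult_iff)
    then show "h \<bullet> r \<le> 1" by (simp add: inner_Pair)
  qed
  define R where "R = {r\<in>cyc_roots. h \<bullet> r = (1::real)}"
  have GF: "{g\<in>Gn. u \<bullet> g = b} = insert (0,0) ((\<lambda>r. (r,1)) ` R)"
    unfolding b0 hu using c0' by (auto simp: Gn_def R_def inner_Pair)
  have finR: "finite R" using roots_fin[where 'n='n] by (simp add: R_def)
  have "int CARD('n) \<le> aff_dim (insert ((0::(real,'n) vec),(0::real)) ((\<lambda>r. (r,1::real)) ` R))"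
    using aF unfolding FG GF aff_dim_convex_hull by simp
  also have "\<dots> \<le> int (card (insert ((0::(real,'n) vec),(0::real)) ((\<lambda>r. (r,1::real)) ` R))) - 1"
    by (rule aff_dim_le_card) (simp add: finR)
  also have "\<dots> \<le> int (card R)"
  proof -
    have "card (insert ((0::(real,'n) vec),(0::real)) ((\<lambda>r. (r,1::real)) ` R)) \<le> Suc (card ((\<lambda>r. (r,1::real)) ` R))"
      by (simp add: card_insert_le_m1 card_insert_if finR)
    moreover have "card ((\<lambda>r. (r,1::real)) ` R) \<le> card R" by (rule card_image_le[OF finR])
    ultimately show ?thesis by linarith
  qed
  finally have cR: "CARD('n) \<le> card R" by simp
  define aa where "aa i = h \<bullet> wv i" for i
  have abnd: "-1 \<le> aa i \<and> aa i \<le> 1" if "i \<in> ?N" for i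
  proof -
    have "wv i \<in> (cyc_roots :: (real,'n) vec set)" "- wv i \<in> (cyc_roots :: (real,'n) vec set)"
      using that by (auto simp: roots_char)
    then show ?thesis using hR by (force simp: aa_def)
  qed
  have asum: "(\<Sum>i\<in>?N. aa i) = 0"
    unfolding aa_def inner_sum_right[symmetric] using sum_wv[where 'n='n] by simp
  define K where "K = {i\<in>?N. aa i = 1 \<or> aa i = -1}"
  define sg :: "nat \<Rightarrow> (real,'n) vec" where "sg i = (if aa i = 1 then wv i else - wv i)" for i
  have "R \<subseteq> sg ` K"
  proof
    fix r assume "r \<in> R"
    then have r: "r \<in> cyc_roots" "h \<bullet> r = 1" by (auto simp: R_def)
    then obtain i where i: "i \<in> ?N" and "r = wv i \<or> r = - wv i" by (auto simp: roots_char)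
    then consider "r = wv i" | "r = - wv i" by blast
    then show "r \<in> sg ` K"
    proof cases
      case 1
      then have "aa i = 1" using r by (simp add: aa_def)
      then show ?thesis using 1 i by (auto simp: K_def sg_def intro!: image_eqI[of _ _ i])
    next
      case 2
      then have "aa i = -1" using r by (simp add: aa_def)
      then show ?thesis using 2 i by (auto simp: K_def sg_def intro!: image_eqI[of _ _ i])
    qed
  qed
  have finK: "finite K" by (simp add: K_def)
  have "card R \<le> card (sg ` K)" using \<open>R \<subseteq> sg ` K\<close> by (rule card_mono[rotated]) (simp add: finK)
  also have "\<dots> \<le> card K" by (rule card_image_le[OF finK])
  finally have cK: "CARD('n) \<le> card K" using cR by simp
  have KN: "K \<subseteq> ?N" by (auto simp: K_def)
  have "K \<noteq> ?N"
  proof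
    assume KeN: "K = ?N"
    define K1 where "K1 = {i\<in>?N. aa i = 1}"
    have "(\<Sum>i\<in>?N. aa i) = (\<Sum>i\<in>?N. if aa i = 1 then 1 else -1)"
    proof (rule sum.cong)
      fix i assume "i \<in> ?N"
      then have "i \<in> K" using KeN by simp
      then have "aa i = 1 \<or> aa i = -1" unfolding K_def by simp
      then show "aa i = (if aa i = 1 then 1 else -1)" by auto
    qed simp
    also have "\<dots> = (\<Sum>i\<in>?N \<inter> {i. aa i = 1}. 1) + (\<Sum>i\<in>?N \<inter> - {i. aa i = 1}. -1)"
      by (rule sum.If_cases) simp
    also have "?N \<inter> {i. aa i = 1} = K1" by (auto simp: K1_def)
    also have "?N \<inter> - {i. aa i = 1} = ?N - K1" by (auto simp: K1_def)
    finally have "(\<Sum>i\<in>?N. aa i) = real (card K1) - real (card (?N - K1))" by simp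
    then have e: "real (card K1) = real (card (?N - K1))" using asum by simp
    have K1s: "K1 \<subseteq> ?N" by (auto simp: K1_def)
    have "card (?N - K1) = card ?N - card K1" by (rule card_Diff_subset) (use K1s in \<open>auto intro: finite_subset\<close>)
    moreover have "card K1 \<le> card ?N" by (rule card_mono) (use K1s in auto)
    ultimately have "card ?N = card K1 + card (?N - K1)" by simp
    then have "CARD('n) + 1 = 2 * card K1" using e by simp
    then show False using odd by simp
  qed
  then obtain j where j: "j \<in> ?N" "j \<notin> K" using KN by blast
  have KNj: "K = ?N - {j}"
  proof (rule card_subset_eq)
    show "finite (?N - {j})" by simp
    show "K \<subseteq> ?N - {j}" using KN j by auto
    have "card (?N - {j}) = CARD('n)" using j by simp
    moreover have "card K \<le> card (?N - {j})" using KN j by (intro card_mono) auto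
    ultimately show "card K = card (?N - {j})" using cK by simp
  qed
  have aj: "aa j = 0"
  proof -
    have "(\<Sum>i\<in>?N. aa i) = aa j + (\<Sum>i\<in>?N - {j}. aa i)" by (rule sum.remove) (use j in auto)
    then have ajs: "aa j = - (\<Sum>i\<in>K. aa i)" using asum KNj by simp
    have "(\<Sum>i\<in>K. aa i) \<in> \<int>"
    proof (rule Ints_sum)
      fix i assume "i \<in> K" then have "aa i = 1 \<or> aa i = -1" by (auto simp: K_def)
      then show "aa i \<in> \<int>" by auto
    qed
    then have "aa j \<in> \<int>" using ajs by simp
    then obtain z where z: "aa j = of_int z" by (auto elim: Ints_cases)
    have "-1 \<le> aa j \<and> aa j \<le> 1" by (rule abnd[OF j(1)])
    moreover have "aa j \<noteq> 1" "aa j \<noteq> -1" using j by (auto simp: K_def)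
    ultimately have "z \<ge> -1" "z \<le> 1" "z \<noteq> 1" "z \<noteq> -1" using z by auto
    then have "z = 0" by linarith
    then show ?thesis using z by simp
  qed
  define lam :: "nat \<Rightarrow> int" where "lam i = (if i \<in> K then (if aa i = 1 then 1 else -1) else 0)" for i
  have la: "of_int (lam i) = aa i" if "i \<in> ?N" for i
  proof (cases "i \<in> K")
    case True then show ?thesis by (auto simp: lam_def K_def)
  next
    case False then have "i = j" using KNj that by auto
    then show ?thesis using False aj by (simp add: lam_def)
  qed
  have lamL: "lam \<in> Lam j (CARD('n)+1)"
    unfolding Lam_def
  proof (intro CollectI conjI ballI allI impI)
    show "lam j = 0" using j by (simp add: lam_def)
    show "lam i \<in> {-1, 1}" if "i \<in> ?N - {j}" for i using that KNj by (simp add: lam_def)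
    show "lam i = 0" if "i \<notin> ?N" for i using that KN by (auto simp: lam_def)
    have "real_of_int (\<Sum>i\<in>?N. lam i) = (\<Sum>i\<in>?N. aa i)"
      by (simp only: of_int_sum) (rule sum.cong[OF refl la])
    then have "real_of_int (\<Sum>i\<in>?N. lam i) = 0" using asum by (rule trans)
    then show "(\<Sum>i\<in>?N. lam i) = 0" by (simp only: of_int_eq_0_iff)
  qed
  have hd: "\<forall>i\<in>?N. h \<bullet> wv i = of_int (lam i)" using la by (simp add: aa_def)
  have "fst ` F = G0 j lam" unfolding Fh by (rule Lfac(2)[OF lamL j(1) hd])
  then show ?thesis using j lamL by blast
qed

lemma induced:
  assumes odd: "odd (CARD('n::{finite,linorder}) + 1)"
  shows "induced_by S_C (\<lambda>a. if a = 0 then 0 else 1) (Delta :: ((real,'n) vec) set set)"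
  unfolding induced_by_def
proof (intro equalityI subsetI)
  fix T :: "(real,'n) vec set" assume "T \<in> Delta"
  then obtain j lam where j: "j \<in> {1..CARD('n)+1}" and lam: "lam \<in> Lam j (CARD('n)+1)" and T: "T = G0 j lam"
    by (rule Delta_memE)
  obtain h :: "(real,'n) vec" where h: "\<forall>i\<in>{1..CARD('n)+1}. h \<bullet> wv i = of_int (lam i)"
    using dual_lam[OF lam] by blast
  have "lower_facet (lifted S_C (\<lambda>a. if a = 0 then 0 else 1)) {p\<in>(Qn::((real,'n) vec \<times> real) set). (-h, 1) \<bullet> p = 0}"
    using Lfac(1)[OF lam j h] by (simp add: Qn_def)
  moreover have "T = fst ` {p\<in>(Qn::((real,'n) vec \<times> real) set). (-h, 1) \<bullet> p = 0}"
    using Lfac(2)[OF lam j h] T by simp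
  ultimately show "T \<in> {fst ` F |F. lower_facet (lifted S_C (\<lambda>a. if a = 0 then 0 else 1)) F}" by blast
next
  fix T :: "(real,'n) vec set"
  assume "T \<in> {fst ` F |F. lower_facet (lifted S_C (\<lambda>a. if a = 0 then 0 else 1)) F}"
  then obtain F where F: "lower_facet (Qn::((real,'n) vec \<times> real) set) F" and T: "T = fst ` F"
    by (auto simp: Qn_def)
  obtain j lam where "j \<in> {1..CARD('n)+1}" "lam \<in> Lam j (CARD('n)+1)" "fst ` F = G0 j lam"
    using conv_facet[OF odd F] by blast
  then show "T \<in> Delta" unfolding Delta_def T by blast
qed


declare sum.cl_ivl_Suc[simp del] prod.cl_ivl_Suc[simp del]

lemma phi_zero[simp]: "phi (0::real^'a::finite) = 0" by (simp add: vec_eq_iff)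

lemma ev_int: "(ev k :: (real,'n::{finite,linorder}) vec) $ c \<in> \<int>"
  by (simp add: ev_comp)

lemma lv_int: "(lv lam k :: (real,'n::{finite,linorder}) vec) $ c \<in> \<int>"
  unfolding lv_def wv_def by (simp add: ev_int Ints_diff Ints_mult)

lemma vol_G0:
  assumes lam: "lam \<in> Lam j (CARD('n::{finite,linorder})+1)" and j: "j \<in> {1..CARD('n)+1}"
  shows "measure lborel (G0 j lam :: (real,'n) vec set) = 1 / fact CARD('n)"
proof -
  let ?I = "{1..CARD('n)+1} - {j}"
  have "\<forall>i\<in>?I. \<exists>g::(real,'n) vec. (\<forall>c. g $ c \<in> \<int>) \<and>
     (\<forall>k\<in>?I. g \<bullet> lv lam k = (if k = i then of_int (lam i) else 0))"
    using lv_dual[OF lam _ j] by blast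
  then obtain gg :: "nat \<Rightarrow> (real,'n) vec" where gg: "\<forall>i\<in>?I. (\<forall>c. gg i $ c \<in> \<int>) \<and>
     (\<forall>k\<in>?I. gg i \<bullet> lv lam k = (if k = i then of_int (lam i) else 0))"
    by (rule bchoice[THEN exE]) blast
  have cI: "card ?I = CARD('n wo)" using j by (simp add: card_wo)
  obtain \<sigma> :: "'n wo \<Rightarrow> nat" where sig: "bij_betw \<sigma> UNIV ?I"
    using finite_same_card_bij[of "UNIV :: 'n wo set" ?I] cI by auto
  have sI: "\<sigma> c \<in> ?I" for c using sig by (meson UNIV_I bij_betwE)
  have sinj: "\<sigma> c = \<sigma> c' \<Longrightarrow> c = c'" for c c' using sig by (auto simp: bij_betw_def inj_on_def)
  define f where "f c = phi (lv lam (\<sigma> c) :: (real,'n) vec)" for c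
  define hs where "hs c = phi (of_int (lam (\<sigma> c)) *\<^sub>R gg (\<sigma> c))" for c
  have sq: "of_int (lam i) * of_int (lam i) = (1::real)" if "i \<in> ?I" for i
    using Lam_nz[OF lam that] by auto
  have dual: "hs c \<bullet> f c' = (if c = c' then 1 else 0)" for c c'
  proof -
    have "hs c \<bullet> f c' = of_int (lam (\<sigma> c)) * (gg (\<sigma> c) \<bullet> lv lam (\<sigma> c'))"
      by (simp add: hs_def f_def inner_phi)
    also have "\<dots> = of_int (lam (\<sigma> c)) * (if \<sigma> c' = \<sigma> c then of_int (lam (\<sigma> c)) else 0)"
      using gg sI by simp
    also have "\<dots> = (if c = c' then 1 else 0)" using sq[OF sI[of c]] sinj by auto
    finally show ?thesis .
  qed
  have fi: "f c $ k \<in> \<int>" for c k by (simp add: f_def lv_int)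
  have hi: "hs c $ k \<in> \<int>" for c k
    using gg sI by (simp add: hs_def Ints_mult)
  have vol: "measure lborel (convex hull (insert 0 (range f))) = 1 / fact CARD('n wo)"
    by (rule unimod_vol[OF dual fi hi])
  have rf: "range f = phi ` Vs j lam"
  proof -
    have "range f = phi ` lv lam ` \<sigma> ` UNIV" by (auto simp: f_def image_iff)
    also have "\<sigma> ` UNIV = ?I" using sig by (simp add: bij_betw_def)
    finally show ?thesis by (simp add: Vs_def)
  qed
  have "phi ` (G0 j lam :: (real,'n) vec set) = convex hull (insert 0 (range f))"
    unfolding G0_Vs convex_hull_linear_image[OF linear_phi] rf
    by simp
  moreover have "(G0 j lam :: (real,'n) vec set) \<in> sets borel"
  proof -
    have "finite (insert (0::(real,'n) vec) (Vs j lam))" by (simp add: Vs_def)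
    then have "compact (G0 j lam :: (real,'n) vec set)" unfolding G0_Vs by (rule finite_imp_compact_convex_hull)
    then show ?thesis by (intro borel_closed compact_imp_closed)
  qed
  ultimately show ?thesis using measure_phi[of "G0 j lam :: (real,'n) vec set"] vol by (simp add: card_wo)
qed

lemma unimod:
  "unimodular (Delta :: ((real,'n::{finite,linorder}) vec) set set)"
  unfolding unimodular_def
proof (intro ballI conjI)
  fix T :: "(real,'n) vec set" assume "T \<in> Delta"
  then obtain j lam where j: "j \<in> {1..CARD('n)+1}" and lam: "lam \<in> Lam j (CARD('n)+1)" and T: "T = G0 j lam"
    by (rule Delta_memE)
  have "\<not> affine_dependent (insert (0::(real,'n) vec) (Vs j lam)) \<and> card (insert (0::(real,'n) vec) (Vs j lam)) = CARD('n) + 1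
     \<and> T = convex hull (insert 0 (Vs j lam)) \<and> (\<forall>v\<in>insert 0 (Vs j lam). lattice_point v)"
    using simplex_facts[OF lam j] T by (auto simp: G0_Vs lattice_point_def Vs_def lv_int)
  then show "lattice_simplex T" unfolding lattice_simplex_def by (rule exI[of _ "insert 0 (Vs j lam)"])
  show "normalized_volume T = 1" unfolding normalized_volume_def T vol_G0[OF lam j] by simp
qed

theorem proposition5p7:
  fixes D :: "(real ^ 'n::{finite,linorder}) set set"
  assumes "D = Delta"
    and "odd (CARD('n) + 1)" and "CARD('n) + 1 \<ge> 3"
  shows "is_triangulation D P_C \<and> unimodular D \<and> regular_triangulation S_C D
       \<and> induced_by S_C (\<lambda>a. if a = 0 then 0 else 1) D"
proof -
  have i: "induced_by S_C (\<lambda>a. if a = 0 then 0 else 1) D" using induced[OF assms(2)] assms(1) by simp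
  moreover have "regular_triangulation S_C D" unfolding regular_triangulation_def using i by blast
  moreover have "is_triangulation D P_C" using triang[OF assms(2)] assms(1) by simp
  moreover have "unimodular D" using unimod assms(1) by simp
  ultimately show ?thesis by blast
qed


end
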